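(* Let $0\le\alpha<\bar\alpha\le1$, $\eta\in(0,1]$ and $p\ge\frac1\eta$. Let $\gamma\in C([0,1],\mathbf T^2)$ with $|\gamma|_\alpha<\infty$ and $A\in\Omega$ with $|A|_{\mathrm{symm}\,\bar\alpha}+|A|_{\mathrm{gr}\eta}<\infty$. Then $$|\gamma_A|_{p\text{-var}}\le|A|_{\mathrm{gr}\eta}|\gamma|^\eta_{p\eta\text{-var}}+2^{\bar\alpha/\alpha}\zeta(\bar\alpha/\alpha)|A|_{\mathrm{symm}\,\bar\alpha}|\gamma|_\alpha^{\bar\alpha/\alpha}.$$
   Context: $E$ is a Banach space; $\mathbf T^2=[-\frac12,\frac12)^2$ with geodesic distance; $\mathcal X=\mathbf T^2\times\{|v|\le\frac14\}$; $\Omega$ is the space of measurable $A:\mathcal X\to E$ additive under concatenation of joinable collinear segments; $|A|_{\mathrm{gr}\eta}=\sup_{|\ell|>0}|A(\ell)|/|\ell|^\eta$; $|A|_{\mathrm{symm}\,\bar\alpha}=\sup|A(\partial P)-A(\partial\bar P)|/|P;\bar P|^{\bar\alpha/2}$ over triangles $P,\bar P$ (contained in sets of diameter $\le\frac14$), where $A(\partial P)$ is the sum of $A$ over the oriented sides and $|P;\bar P|$ is the area of the symmetric difference of their interiors if they have the same orientation and $|P|+|\bar P|$ otherwise. All paths have diameter $\le\frac14$. For a partition $D$ of $[0,1]$, $\gamma^D$ is the piecewise affine interpolation and $A(\gamma^D)$ the sum of $A$ over its pieces; $\gamma_A(t)=\lim_{|D|\to0}A(\gamma^D\restriction_{[0,t]})$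 (this limit exists under the hypotheses). With $P_{sut}$ the triangle formed by $\gamma(s),\gamma(u),\gamma(t)$, $|\gamma|_{[s,t]}=\sup_{u\in[s,t]}|P_{sut}|^{1/2}$ and $|\gamma|_\alpha=\sup_D\sum_{[a,b]\in D}|\gamma|^\alpha_{[a,b]}$. For a path $x$ in a metric space, $|x|^p_{p\text{-var}}=\sup_D\sum_{[s,t]\in D}d(x(s),x(t))^p$. *)

theory Defs
  imports "HOL-Analysis.Analysis"
begin

definition wrap :: "real \<Rightarrow> real" where
  "wrap r = r - of_int \<lfloor>r + 1/2\<rfloor>"

definition tproj :: "real^2 \<Rightarrow> real^2" where
  "tproj y = (\<chi> i. wrap (y $ i))"

definition torus :: "(real^2) set" where
  "torus = {x. \<forall>i. -1/2 \<le> x $ i \<and> x $ i < 1/2}"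

text \<open>Shortest displacement vector from x to y on the torus.\<close>
definition tdiff :: "real^2 \<Rightarrow> real^2 \<Rightarrow> real^2" where
  "tdiff y x = tproj (y - x)"

definition tdist :: "real^2 \<Rightarrow> real^2 \<Rightarrow> real" where
  "tdist x y = norm (tdiff y x)"

text \<open>A segment (x,v) starts at x and ends at x+v (mod 1); its length is norm v.\<close>
definition segs :: "((real^2) \<times> (real^2)) set" where
  "segs = torus \<times> cball 0 (1/4)"

definition Omega :: "((real^2) \<times> (real^2) \<Rightarrow> 'e::banach) set" where
  "Omega = {A. A \<in> borel_measurable (restrict_space borel segs) \<and>
     (\<forall>x v w. x \<in> torus \<and> (\<exists>u a b. 0 \<le> a \<and> 0 \<le> b \<and> v = a *\<^sub>R u \<and> w = b *\<^sub>R u)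
        \<and> norm (v + w) \<le> 1/4 \<longrightarrow> A (x, v + w) = A (x, v) + A (tproj (x + v), w))}"

definition epowr :: "ereal \<Rightarrow> real \<Rightarrow> ereal" where
  "epowr x a = (case x of ereal r \<Rightarrow> ereal (r powr a)
                 | PInfty \<Rightarrow> (if a > 0 then \<infinity> else if a = 0 then 1 else 0)
                 | MInfty \<Rightarrow> 0)"

text \<open>Real power with the standard convention x^0 = 1 (also for x = 0).\<close>
definition rpow :: "real \<Rightarrow> real \<Rightarrow> real" where
  "rpow x a = (if a = 0 then 1 else x powr a)"

definition eratio :: "real \<Rightarrow> real \<Rightarrow> ereal" where
  "eratio n d = (if d > 0 then ereal (n / d) else if n = 0 then 0 else \<infinity>)"

definition zeta_real :: "real \<Rightarrow> real" where
  "zeta_real s = (\<Sum>n. 1 / (real (Suc n)) powr s)"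

definition gr_norm :: "real \<Rightarrow> ((real^2) \<times> (real^2) \<Rightarrow> 'e::banach) \<Rightarrow> ereal" where
  "gr_norm \<eta> A = (SUP l \<in> {l \<in> segs. norm (snd l) > 0}.
        ereal (norm (A l) / norm (snd l) powr \<eta>))"

definition triangles :: "((real^2) \<times> (real^2) \<times> (real^2)) set" where
  "triangles = {(a,b,c). a \<in> torus \<and> b \<in> torus \<and> c \<in> torus \<and>
      tdist a b \<le> 1/4 \<and> tdist b c \<le> 1/4 \<and> tdist c a \<le> 1/4}"

definition det2 :: "real^2 \<Rightarrow> real^2 \<Rightarrow> real" where
  "det2 v w = v $ 1 * w $ 2 - v $ 2 * w $ 1"

definition tri_det :: "(real^2) \<times> (real^2) \<times> (real^2) \<Rightarrow> real" where
  "tri_det P = (case P of (a,b,c) \<Rightarrow> det2 (tdiff b a) (tdiff c a))"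

definition tri_area :: "(real^2) \<times> (real^2) \<times> (real^2) \<Rightarrow> real" where
  "tri_area P = \<bar>tri_det P\<bar> / 2"

definition tri_int :: "(real^2) \<times> (real^2) \<times> (real^2) \<Rightarrow> (real^2) set" where
  "tri_int P = (case P of (a,b,c) \<Rightarrow>
      tproj ` interior (convex hull {a, a + tdiff b a, a + tdiff c a}))"

definition tri_dist :: "(real^2) \<times> (real^2) \<times> (real^2) \<Rightarrow> (real^2) \<times> (real^2) \<times> (real^2) \<Rightarrow> real" where
  "tri_dist P Q = (if sgn (tri_det P) = sgn (tri_det Q)
      then measure lborel ((tri_int P - tri_int Q) \<union> (tri_int Q - tri_int P))
      else tri_area P + tri_area Q)"

definition bdry :: "((real^2) \<times> (real^2) \<Rightarrow> 'e::banach) \<Rightarrow> (real^2) \<times> (real^2) \<times> (real^2) \<Rightarrow> 'e" where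
  "bdry A P = (case P of (a,b,c) \<Rightarrow> A (a, tdiff b a) + A (b, tdiff c b) + A (c, tdiff a c))"

definition symm_norm :: "real \<Rightarrow> ((real^2) \<times> (real^2) \<Rightarrow> 'e::banach) \<Rightarrow> ereal" where
  "symm_norm \<alpha> A = (SUP PQ \<in> triangles \<times> triangles.
      eratio (norm (bdry A (fst PQ) - bdry A (snd PQ))) (tri_dist (fst PQ) (snd PQ) powr (\<alpha>/2)))"

definition partition01 :: "real list \<Rightarrow> bool" where
  "partition01 D \<longleftrightarrow> 2 \<le> length D \<and> hd D = 0 \<and> last D = 1 \<and> sorted_wrt (<) D"

definition intervals :: "real list \<Rightarrow> (real \<times> real) list" where
  "intervals D = zip D (tl D)"

definition mesh :: "real list \<Rightarrow> real" where
  "mesh D = Max (set (map (\<lambda>(a,b). b - a) (intervals D)))"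

definition pvar :: "('a \<Rightarrow> 'a \<Rightarrow> real) \<Rightarrow> (real \<Rightarrow> 'a) \<Rightarrow> real \<Rightarrow> ereal" where
  "pvar d x p = epowr (SUP D \<in> {D. partition01 D}.
      ereal (sum_list (map (\<lambda>(s,t). d (x s) (x t) powr p) (intervals D)))) (1/p)"

definition tri_size :: "(real \<Rightarrow> real^2) \<Rightarrow> real \<Rightarrow> real \<Rightarrow> real" where
  "tri_size \<gamma> s t = (SUP u \<in> {s..t}. sqrt (tri_area (\<gamma> s, \<gamma> u, \<gamma> t)))"

definition alpha_var :: "real \<Rightarrow> (real \<Rightarrow> real^2) \<Rightarrow> ereal" where
  "alpha_var \<alpha> \<gamma> = (SUP D \<in> {D. partition01 D}.
      ereal (sum_list (map (\<lambda>(a,b). rpow (tri_size \<gamma> a b) \<alpha>) (intervals D))))"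

text \<open>A applied to the piecewise affine interpolation gamma^D restricted to [0,t].\<close>
definition interp_sum :: "((real^2) \<times> (real^2) \<Rightarrow> 'e::banach) \<Rightarrow> (real \<Rightarrow> real^2) \<Rightarrow> real list \<Rightarrow> real \<Rightarrow> 'e" where
  "interp_sum A \<gamma> D t = sum_list (map (\<lambda>(a,b).
       if b \<le> t then A (\<gamma> a, tdiff (\<gamma> b) (\<gamma> a))
       else if a < t then A (\<gamma> a, ((t - a) / (b - a)) *\<^sub>R tdiff (\<gamma> b) (\<gamma> a))
       else 0) (intervals D))"

definition gammaA :: "((real^2) \<times> (real^2) \<Rightarrow> 'e::banach) \<Rightarrow> (real \<Rightarrow> real^2) \<Rightarrow> real \<Rightarrow> 'e" where
  "gammaA A \<gamma> t = (THE L. \<forall>\<epsilon>>0. \<exists>\<delta>>0. \<forall>D. partition01 D \<and> mesh D < \<delta> \<longrightarrow>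
       norm (interp_sum A \<gamma> D t - L) < \<epsilon>)"

definition torus_path :: "(real \<Rightarrow> real^2) \<Rightarrow> bool" where
  "torus_path \<gamma> \<longleftrightarrow> \<gamma> ` {0..1} \<subseteq> torus \<and>
     (\<forall>t\<in>{0..1}. \<forall>\<epsilon>>0. \<exists>\<delta>>0. \<forall>s\<in>{0..1}. \<bar>s - t\<bar> < \<delta> \<longrightarrow> tdist (\<gamma> s) (\<gamma> t) < \<epsilon>) \<and>
     (\<forall>s\<in>{0..1}. \<forall>t\<in>{0..1}. tdist (\<gamma> s) (\<gamma> t) \<le> 1/4)"

end

theory Submission
  imports Defs
begin


definition nxt :: "real set \<Rightarrow> real \<Rightarrow> real" where
  "nxt F x = Min {y\<in>F. x < y}"

definition chain :: "(real \<Rightarrow> real \<Rightarrow> 'a::comm_monoid_add) \<Rightarrow> real set \<Rightarrow> 'a" where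
  "chain f F = (\<Sum>x\<in>F - {Max F}. f x (nxt F x))"

definition part :: "real \<Rightarrow> real \<Rightarrow> real set \<Rightarrow> bool" where
  "part a b F \<longleftrightarrow> finite F \<and> a \<in> F \<and> b \<in> F \<and> F \<subseteq> {a..b}"

lemma chain_single[simp]: "chain f {a} = 0"
  by (simp add: chain_def)

lemma chain_split:
  assumes F: "finite F" and c: "c \<in> F"
  shows "chain f F = chain f {x\<in>F. x \<le> c} + chain f {x\<in>F. c \<le> x}"
proof -
  define M where "M = Max F"
  have cM: "c \<le> M" using F c M_def by simp
  have MF: "M \<in> F" using F c M_def by (auto intro: Max_in)
  have hL: "Max {x\<in>F. x \<le> c} = c" using F c by (intro Max_eqI) auto
  have hR: "Max {x\<in>F. c \<le> x} = M" using F c cM MF M_def by (intro Max_eqI) auto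
  have s1: "{x\<in>F. x \<le> c} - {c} = {x\<in>F. x < c}" by auto
  have s2: "F - {M} = {x\<in>F. x < c} \<union> ({x\<in>F. c \<le> x} - {M})" using cM by auto
  have n1: "nxt {x\<in>F. x \<le> c} x = nxt F x" if "x \<in> F" "x < c" for x
  proof -
    have fin: "finite {y\<in>F. x < y}" using F by simp
    have ne: "c \<in> {y\<in>F. x < y}" using that c by simp
    have "Min {y\<in>F. x < y} \<le> c" using fin ne by simp
    then have "Min {y\<in>F. x < y} \<in> {y \<in> {x\<in>F. x \<le> c}. x < y}"
      using Min_in[OF fin] ne by auto
    then have "Min {y \<in> {x\<in>F. x \<le> c}. x < y} = Min {y\<in>F. x < y}"
      using fin F by (intro Min_eqI) auto
    then show ?thesis by (simp add: nxt_def)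
  qed
  have n2: "nxt {x\<in>F. c \<le> x} x = nxt F x" if "x \<in> F" "c \<le> x" for x
  proof -
    have "{y \<in> {x\<in>F. c \<le> x}. x < y} = {y\<in>F. x < y}" using that by auto
    then show ?thesis by (simp add: nxt_def)
  qed
  have "chain f F = (\<Sum>x\<in>{x\<in>F. x < c}. f x (nxt F x)) + (\<Sum>x\<in>{x\<in>F. c \<le> x} - {M}. f x (nxt F x))"
    unfolding chain_def M_def[symmetric] s2 using F by (intro sum.union_disjoint) auto
  also have "(\<Sum>x\<in>{x\<in>F. x < c}. f x (nxt F x)) = chain f {x\<in>F. x \<le> c}"
    unfolding chain_def hL s1 by (rule sum.cong) (auto simp: n1)
  also have "(\<Sum>x\<in>{x\<in>F. c \<le> x} - {M}. f x (nxt F x)) = chain f {x\<in>F. c \<le> x}"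
    unfolding chain_def hR by (rule sum.cong) (auto simp: n2)
  finally show ?thesis .
qed

lemma chain_pair: "a < b \<Longrightarrow> chain f {a, b} = f a b"
proof -
  assume ab: "a < b"
  have "Max {a,b} = b" using ab by simp
  moreover have "{a,b} - {b} = {a}" using ab by auto
  moreover have "nxt {a,b} a = b" unfolding nxt_def using ab
    by (subgoal_tac "{y \<in> {a, b}. a < y} = {b}") auto
  ultimately show ?thesis by (simp add: chain_def)
qed

lemma chain_insert_min:
  assumes F: "finite F" "F \<noteq> {}" and x: "x < Min F"
  shows "chain f (insert x F) = f x (Min F) + chain f F"
proof -
  obtain m where mdef: "m = Min F" by simp
  have m: "m \<in> F" using F mdef by simp
  have mle: "\<And>y. y \<in> F \<Longrightarrow> m \<le> y" using F mdef by simp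
  have xm: "x < m" using x mdef by simp
  have "chain f (insert x F) = chain f {y\<in>insert x F. y \<le> m} + chain f {y\<in>insert x F. m \<le> y}"
    using F m by (intro chain_split) auto
  also have "{y\<in>insert x F. y \<le> m} = {x, m}" using xm m mle by (auto intro: order.antisym)
  also have "{y\<in>insert x F. m \<le> y} = F" using xm m mle by auto
  finally have "chain f (insert x F) = chain f {x, m} + chain f F" .
  moreover have "chain f {x, m} = f x m" by (rule chain_pair[OF xm])
  ultimately show ?thesis using mdef by simp
qed

definition intervals_sum where "intervals_sum f D = sum_list (map (\<lambda>(a,b). f a b) (intervals D))"

lemma list_chain:
  assumes "sorted_wrt (<) D" "D \<noteq> []"
  shows "sum_list (map (\<lambda>(a,b). f a b) (intervals D)) = chain f (set D)"
  using assms
proof (induction D)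
  case Nil then show ?case by simp
next
  case (Cons x D)
  show ?case
  proof (cases D)
    case Nil then show ?thesis by (simp add: intervals_def)
  next
    case (Cons y D')
    have mn: "Min (set D) = y" using Cons.prems Cons
      by (intro Min_eqI) (auto simp: less_imp_le)
    have "x < Min (set D)" using Cons.prems Cons mn by auto
    then have "chain f (set (x # D)) = f x y + chain f (set D)"
      using chain_insert_min[of "set D" x f] Cons mn by simp
    moreover have "intervals (x # D) = (x, y) # intervals D"
      using Cons by (simp add: intervals_def)
    ultimately show ?thesis using Cons.IH Cons.prems Cons by simp
  qed
qed


lemma wrap_bounds: "-1/2 \<le> wrap r \<and> wrap r < 1/2"
  unfolding wrap_def by linarith

lemma abs_wrap_le: "\<bar>wrap r\<bar> \<le> \<bar>r - of_int k\<bar>"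
proof -
  define m where "m = \<lfloor>r + 1/2\<rfloor>"
  have w: "wrap r = r - of_int m" by (simp add: wrap_def m_def)
  have b: "-1/2 \<le> r - of_int m" "r - of_int m < 1/2" using w wrap_bounds[of r] by auto
  show ?thesis
  proof (cases "k = m")
    case True then show ?thesis using w by simp
  next
    case False
    then have "k \<le> m - 1 \<or> k \<ge> m + 1" by linarith
    then have "of_int k \<le> (of_int m::real) - 1 \<or> of_int k \<ge> (of_int m::real) + 1"
      by (metis of_int_1 of_int_diff of_int_add of_int_le_iff)
    then show ?thesis using w b by auto
  qed
qed

definition lat :: "(real^2) set" where "lat = {v. \<forall>i. v $ i \<in> \<int>}"

lemma tproj_lat: "z - tproj z \<in> lat"
  by (auto simp: lat_def tproj_def wrap_def)

lemma lat_add: "u \<in> lat \<Longrightarrow> v \<in> lat \<Longrightarrow> u + v \<in> lat"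
  by (auto simp: lat_def)
lemma lat_minus: "u \<in> lat \<Longrightarrow> - u \<in> lat"
  by (auto simp: lat_def)

lemma tproj_min: assumes "v \<in> lat" shows "norm (tproj z) \<le> norm (z - v)"
proof (rule norm_le_componentwise_cart)
  fix i
  from assms obtain k where "v $ i = of_int k" by (auto simp: lat_def elim!: Ints_cases)
  then show "norm (tproj z $ i) \<le> norm ((z - v) $ i)"
    using abs_wrap_le[of "z $ i" k] by (simp add: tproj_def)
qed

lemma norm_tproj_le: "norm (tproj z) \<le> norm z"
  using tproj_min[of 0 z] by (simp add: lat_def)

lemma norm_tproj_uminus: "norm (tproj (- z)) = norm (tproj z)"
proof -
  have "norm (tproj (- z)) \<le> norm (- z - (- (z - tproj z)))"
    by (intro tproj_min lat_minus tproj_lat)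
  moreover have "norm (tproj z) \<le> norm (z - (- (- z - tproj (- z))))"
    by (intro tproj_min lat_minus tproj_lat)
  ultimately show ?thesis by (simp add: norm_minus_commute)
qed

lemma tdist_sym: "tdist x y = tdist y x"
  unfolding tdist_def tdiff_def
  by (metis minus_diff_eq norm_tproj_uminus)

lemma tdist_triangle: "tdist x z \<le> tdist x y + tdist y z"
proof -
  have l: "((z - y) - tproj (z - y)) + ((y - x) - tproj (y - x)) \<in> lat"
    by (intro lat_add tproj_lat)
  have "tdist x z = norm (tproj (z - x))" by (simp add: tdist_def tdiff_def)
  also have "\<dots> \<le> norm ((z - x) - (((z - y) - tproj (z - y)) + ((y - x) - tproj (y - x))))"
    by (rule tproj_min[OF l])
  also have "(z - x) - (((z - y) - tproj (z - y)) + ((y - x) - tproj (y - x))) = tproj (z - y) + tproj (y - x)"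
    by (simp add: algebra_simps)
  also have "norm \<dots> \<le> norm (tproj (z - y)) + norm (tproj (y - x))" by (rule norm_triangle_ineq)
  finally show ?thesis by (simp add: tdist_def tdiff_def)
qed

lemma tdist_self[simp]: "tdist x x = 0"
  by (simp add: tdist_def tdiff_def tproj_def wrap_def vec_eq_iff)

lemma tdiff_self[simp]: "tdiff x x = 0"
  by (simp add: tdiff_def tproj_def wrap_def vec_eq_iff)

lemma tdist_nonneg: "0 \<le> tdist x y" by (simp add: tdist_def)

lemma tproj_torus: "x \<in> torus \<Longrightarrow> tproj x = x"
proof -
  assume x: "x \<in> torus"
  have "wrap (x $ i) = x $ i" for i
  proof -
    have "-1/2 \<le> x $ i" "x $ i < 1/2" using x unfolding torus_def by auto
    then have "\<lfloor>x $ i + 1/2\<rfloor> = 0" by (intro floor_unique) auto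
    then show ?thesis by (simp add: wrap_def)
  qed
  then show ?thesis by (simp add: tproj_def vec_eq_iff)
qed

lemma norm_tdiff: "norm (tdiff y x) = tdist x y" by (simp add: tdist_def)

lemma interior_degenerate:
  fixes a u w :: "real^2"
  assumes "det2 u w = 0"
  shows "interior (convex hull {a, a + u, a + w}) = {}"
proof (cases "u = 0 \<and> w = 0")
  case True then show ?thesis by simp
next
  case False
  define n :: "real^2" where "n = (if u \<noteq> 0 then (\<chi> i. if i = 1 then u $ 2 else - u $ 1)
                                  else (\<chi> i. if i = 1 then w $ 2 else - w $ 1))"
  have n0: "n \<noteq> 0"
    using False unfolding n_def vec_eq_iff forall_2 by auto
  have nu: "n \<bullet> u = 0" and nw: "n \<bullet> w = 0"
    using assms False unfolding n_def inner_vec_def sum_2 det2_def by (auto simp: algebra_simps)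
  have "{a, a + u, a + w} \<subseteq> {x. n \<bullet> x = n \<bullet> a}" using nu nw by (auto simp: inner_add_right)
  then have "convex hull {a, a + u, a + w} \<subseteq> {x. n \<bullet> x = n \<bullet> a}"
    by (intro hull_minimal convex_hyperplane)
  then have "interior (convex hull {a, a + u, a + w}) \<subseteq> interior {x. n \<bullet> x = n \<bullet> a}"
    by (rule interior_mono)
  then show ?thesis using n0 by simp
qed

lemma tri_int_degenerate: "tri_det P = 0 \<Longrightarrow> tri_int P = {}"
  by (cases P) (auto simp: tri_det_def tri_int_def interior_degenerate)


lemma A_zero: assumes "A \<in> Omega" "x \<in> torus" shows "A (x, 0) = 0"
proof -
  have H: "\<forall>x v w. x \<in> torus \<and> (\<exists>u a b. 0 \<le> a \<and> 0 \<le> b \<and> v = a *\<^sub>R u \<and> w = b *\<^sub>R u)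
        \<and> norm (v + w) \<le> 1/4 \<longrightarrow> A (x, v + w) = A (x, v) + A (tproj (x + v), w)"
    using assms(1) unfolding Omega_def by simp
  have E: "\<exists>u a b. 0 \<le> a \<and> 0 \<le> b \<and> (0::real^2) = a *\<^sub>R u \<and> (0::real^2) = b *\<^sub>R u"
    by (rule exI[of _ 0], rule exI[of _ 0], rule exI[of _ 0]) simp
  have "A (x, 0 + 0) = A (x, 0) + A (tproj (x + 0), 0)"
    by (rule H[rule_format]) (intro conjI assms(2) E, simp)
  then show ?thesis using tproj_torus[OF assms(2)] by simp
qed

lemma gr_upper:
  assumes "l \<in> segs" "norm (snd l) > 0"
  shows "ereal (norm (A l) / norm (snd l) powr \<eta>) \<le> gr_norm \<eta> A"
  unfolding gr_norm_def by (rule SUP_upper) (use assms in auto)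

lemma gr_bound:
  assumes "gr_norm \<eta> A = ereal G" "A \<in> Omega" "x \<in> torus" "norm v \<le> 1/4" "0 < \<eta>"
  shows "norm (A (x, v)) \<le> G * norm v powr \<eta>"
proof (cases "v = 0")
  case True
  have "G \<ge> 0"
  proof -
    define e :: "real^2" where "e = (\<chi> i. if i = 1 then 1/4 else 0)"
    have ne: "norm e = 1/4"
      unfolding e_def norm_vec_def L2_set_def sum_2 by simp
    have "ereal (norm (A (x, e)) / norm (snd (x, e)) powr \<eta>) \<le> gr_norm \<eta> A"
      by (rule gr_upper) (use ne assms(3) in \<open>auto simp: segs_def\<close>)
    moreover have "0 \<le> norm (A (x, e)) / norm (snd (x, e)) powr \<eta>"
      by simp
    ultimately show ?thesis using assms(1) by (metis ereal_less_eq(3) order_trans)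
  qed
  then show ?thesis using True A_zero[OF assms(2,3)] by simp
next
  case False
  have "(x, v) \<in> {l \<in> segs. norm (snd l) > 0}" using False assms by (auto simp: segs_def)
  then have "ereal (norm (A (x, v)) / norm v powr \<eta>) \<le> gr_norm \<eta> A"
    unfolding gr_norm_def by (metis (no_types, lifting) SUP_upper snd_conv)
  then have "norm (A (x, v)) / norm v powr \<eta> \<le> G" using assms(1) by simp
  moreover have "norm v powr \<eta> > 0" using False by simp
  ultimately show ?thesis by (simp add: divide_le_eq mult.commute)
qed

lemma triangle_self: "a \<in> torus \<Longrightarrow> (a, a, a) \<in> triangles"
  by (simp add: triangles_def)

lemma symm_upper:
  assumes "P \<in> triangles" "Q \<in> triangles"
  shows "eratio (norm (bdry A P - bdry A Q)) (tri_dist P Q powr (\<alpha>/2)) \<le> symm_norm \<alpha> A"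
proof -
  have "(P, Q) \<in> triangles \<times> triangles" using assms by simp
  then show ?thesis unfolding symm_norm_def by (metis (no_types, lifting) SUP_upper fst_conv snd_conv)
qed

lemma symm_bound:
  assumes S: "symm_norm \<alpha>' A = ereal S" and Om: "A \<in> Omega" and P: "P \<in> triangles" and al: "0 < \<alpha>'"
  shows "norm (bdry A P) \<le> S * tri_area P powr (\<alpha>'/2)"
proof -
  obtain a b c where Pd: "P = (a, b, c)" by (cases P) auto
  have a: "a \<in> torus" using P Pd by (simp add: triangles_def)
  define Q where "Q = (a, a, a)"
  have Q: "Q \<in> triangles" using a by (simp add: Q_def triangles_def)
  have bQ: "bdry A Q = 0" using A_zero[OF Om a] by (simp add: Q_def bdry_def)
  have dQ: "tri_det Q = 0" by (simp add: Q_def tri_det_def det2_def)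
  have up: "eratio (norm (bdry A P - bdry A Q)) (tri_dist P Q powr (\<alpha>'/2)) \<le> ereal S"
    using symm_upper[OF P Q, of A \<alpha>'] S by simp
  have S0: "0 \<le> S"
  proof -
    have "eratio (norm (bdry A Q - bdry A Q)) (tri_dist Q Q powr (\<alpha>'/2)) \<le> ereal S"
      using symm_upper[OF Q Q, of A \<alpha>'] S by simp
    then show ?thesis by (simp add: eratio_def split: if_splits)
  qed
  show ?thesis
  proof (cases "tri_det P = 0")
    case True
    have "tri_dist P Q = 0"
      using True dQ tri_int_degenerate[of P] tri_int_degenerate[of Q] by (simp add: tri_dist_def)
    then have "norm (bdry A P) = 0" using up bQ by (simp add: eratio_def split: if_splits)
    then show ?thesis using S0 by simp
  next
    case False
    have "sgn (tri_det P) \<noteq> sgn (tri_det Q)" using False dQ by (simp add: sgn_if)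
    then have "tri_dist P Q = tri_area P" using dQ
      by (simp add: tri_dist_def tri_area_def)
    moreover have "tri_area P > 0" using False by (simp add: tri_area_def)
    ultimately have pos: "tri_dist P Q powr (\<alpha>'/2) > 0" by simp
    then have "norm (bdry A P) / tri_area P powr (\<alpha>'/2) \<le> S"
      using up bQ \<open>tri_dist P Q = tri_area P\<close> by (simp add: eratio_def)
    then show ?thesis using pos \<open>tri_dist P Q = tri_area P\<close> by (simp add: divide_le_eq mult.commute)
  qed
qed


lemma chain_nonneg: fixes f :: "real \<Rightarrow> real \<Rightarrow> real" assumes "\<And>x y. 0 \<le> f x y" shows "0 \<le> chain f F"
  unfolding chain_def by (rule sum_nonneg) (rule assms)

lemma list_sum_nth:
  "sum_list (map (\<lambda>(a,b). f a b) (intervals xs)) = (\<Sum>i<length xs - 1. f (xs ! i) (xs ! Suc i))"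
proof (induction xs)
  case Nil then show ?case by (simp add: intervals_def)
next
  case (Cons a xs)
  show ?case
  proof (cases xs)
    case Nil then show ?thesis by (simp add: intervals_def)
  next
    case (Cons b ys)
    have "intervals (a # xs) = (a, b) # intervals xs" using Cons by (simp add: intervals_def)
    then show ?thesis using Cons.IH Cons by (simp add: sum.lessThan_Suc_shift del: sum.lessThan_Suc)
  qed
qed

lemma chain_seq:
  assumes "sorted_wrt (<) xs" "xs \<noteq> []"
  shows "chain f (set xs) = (\<Sum>i<length xs - 1. f (xs ! i) (xs ! Suc i))"
  using list_chain[OF assms, of f] list_sum_nth[of f xs] by simp

lemma det2_bound: "\<bar>det2 v w\<bar> \<le> norm v * norm w"
proof -
  have nv: "norm v = sqrt ((v$1)^2 + (v$2)^2)" for v :: "real^2"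
    unfolding norm_vec_def L2_set_def sum_2 by simp
  have "(det2 v w)^2 \<le> ((v$1)^2 + (v$2)^2) * ((w$1)^2 + (w$2)^2)"
  proof -
    have "((v$1)^2 + (v$2)^2) * ((w$1)^2 + (w$2)^2) - (det2 v w)^2 = (v$1 * w$1 + v$2 * w$2)^2"
      unfolding det2_def by (simp add: power2_eq_square algebra_simps)
    then show ?thesis by (smt (verit) zero_le_power2)
  qed
  then have "sqrt ((det2 v w)^2) \<le> sqrt (((v$1)^2 + (v$2)^2) * ((w$1)^2 + (w$2)^2))"
    by (rule real_sqrt_le_mono)
  then show ?thesis by (simp add: nv real_sqrt_mult)
qed

locale ctx =
  fixes \<alpha> \<alpha>' \<eta> :: real and \<gamma> :: "real \<Rightarrow> real^2" and A :: "(real^2) \<times> (real^2) \<Rightarrow> 'e::banach"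
    and G S W :: real
  assumes al: "0 < \<alpha>" "\<alpha> < \<alpha>'" "\<alpha>' \<le> 1" and eta: "0 < \<eta>" "\<eta> \<le> 1"
    and tp: "torus_path \<gamma>" and Om: "A \<in> Omega"
    and Gd: "gr_norm \<eta> A = ereal G" and Sd: "symm_norm \<alpha>' A = ereal S"
    and Wd: "alpha_var \<alpha> \<gamma> = ereal W"
begin

definition g where "g a b = A (\<gamma> a, tdiff (\<gamma> b) (\<gamma> a))"
definition ts where "ts a b = tri_size \<gamma> a b"
definition tsa where "tsa a b = ts a b powr \<alpha>"
definition \<theta> where "\<theta> = \<alpha>' / \<alpha>"

lemma theta_gt1: "1 < \<theta>" using al by (simp add: \<theta>_def)

lemma gam_torus: "t \<in> {0..1} \<Longrightarrow> \<gamma> t \<in> torus"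
  using tp by (auto simp: torus_path_def)

lemma gam_close: "s \<in> {0..1} \<Longrightarrow> t \<in> {0..1} \<Longrightarrow> tdist (\<gamma> s) (\<gamma> t) \<le> 1/4"
  using tp by (auto simp: torus_path_def)

lemma gam_tri: "a \<in> {0..1} \<Longrightarrow> b \<in> {0..1} \<Longrightarrow> c \<in> {0..1} \<Longrightarrow> (\<gamma> a, \<gamma> b, \<gamma> c) \<in> triangles"
  using gam_torus gam_close by (simp add: triangles_def)

lemma G0: "0 \<le> G"
proof -
  define e :: "real^2" where "e = (\<chi> i. if i = 1 then 1/4 else 0)"
  have ne: "norm e = 1/4"
    unfolding e_def norm_vec_def L2_set_def sum_2 by simp
  have "ereal (norm (A (\<gamma> 0, e)) / norm (snd (\<gamma> 0, e)) powr \<eta>) \<le> gr_norm \<eta> A"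
    by (rule gr_upper) (use ne gam_torus[of 0] in \<open>auto simp: segs_def\<close>)
  moreover have "0 \<le> norm (A (\<gamma> 0, e)) / norm (snd (\<gamma> 0, e)) powr \<eta>"
    by simp
  ultimately show ?thesis using Gd by (metis ereal_less_eq(3) order_trans)
qed

lemma g_bound: "a \<in> {0..1} \<Longrightarrow> b \<in> {0..1} \<Longrightarrow> norm (g a b) \<le> G * tdist (\<gamma> a) (\<gamma> b) powr \<eta>"
  unfolding g_def using gr_bound[OF Gd Om gam_torus, of a "tdiff (\<gamma> b) (\<gamma> a)"] eta gam_close
  by (simp add: norm_tdiff)

lemma g_self[simp]: "a \<in> {0..1} \<Longrightarrow> g a a = 0"
  unfolding g_def using A_zero[OF Om gam_torus] by simp

lemma S0: "0 \<le> S"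
proof -
  have "(\<gamma> 0, \<gamma> 0, \<gamma> 0) \<in> triangles" using gam_tri by simp
  then have "eratio (norm (bdry A (\<gamma> 0, \<gamma> 0, \<gamma> 0) - bdry A (\<gamma> 0, \<gamma> 0, \<gamma> 0))) (tri_dist (\<gamma> 0, \<gamma> 0, \<gamma> 0) (\<gamma> 0, \<gamma> 0, \<gamma> 0) powr (\<alpha>'/2)) \<le> ereal S"
    using symm_upper Sd by metis
  then show ?thesis by (simp add: eratio_def split: if_splits)
qed

lemma area_bound: "tri_area (a, b, c) \<le> tdist a b * tdist a c / 2"
  unfolding tri_area_def tri_det_def using det2_bound[of "tdiff b a" "tdiff c a"]
  by (simp add: norm_tdiff)

lemma ts_bdd: "bdd_above ((\<lambda>u. sqrt (tri_area (\<gamma> a, \<gamma> u, \<gamma> b))) ` {a..b})"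
  if "a \<in> {0..1}" "b \<in> {0..1}"
proof (rule bdd_aboveI2)
  fix u assume u: "u \<in> {a..b}"
  then have "u \<in> {0..1}" using that by auto
  then have "tri_area (\<gamma> a, \<gamma> u, \<gamma> b) \<le> 1/4 * (1/4) / 2"
    using area_bound[of "\<gamma> a" "\<gamma> u" "\<gamma> b"] gam_close[of a u] gam_close[of a b] that tdist_nonneg
    by (smt (verit, best) divide_right_mono mult_mono)
  then show "sqrt (tri_area (\<gamma> a, \<gamma> u, \<gamma> b)) \<le> sqrt (1/32)" by (simp add: real_sqrt_le_mono)
qed

lemma ts_upper: "a \<in> {0..1} \<Longrightarrow> b \<in> {0..1} \<Longrightarrow> u \<in> {a..b} \<Longrightarrow> sqrt (tri_area (\<gamma> a, \<gamma> u, \<gamma> b)) \<le> ts a b"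
  unfolding ts_def tri_size_def by (rule cSUP_upper[OF _ ts_bdd])

lemma ts_nonneg: "a \<in> {0..1} \<Longrightarrow> b \<in> {0..1} \<Longrightarrow> a \<le> b \<Longrightarrow> 0 \<le> ts a b"
  using ts_upper[of a b a] by (smt (verit) atLeastAtMost_iff real_sqrt_ge_zero tri_area_def abs_ge_zero divide_nonneg_pos)

lemma ts_le: "a \<in> {0..1} \<Longrightarrow> b \<in> {0..1} \<Longrightarrow> a \<le> b \<Longrightarrow> ts a b \<le> c \<Longrightarrow> (\<And>u. u \<in> {a..b} \<Longrightarrow> sqrt (tri_area (\<gamma> a, \<gamma> u, \<gamma> b)) \<le> c) \<Longrightarrow> True"
  by simp

lemma ts_least: "a \<le> b \<Longrightarrow> (\<And>u. u \<in> {a..b} \<Longrightarrow> sqrt (tri_area (\<gamma> a, \<gamma> u, \<gamma> b)) \<le> c) \<Longrightarrow> ts a b \<le> c"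
  unfolding ts_def tri_size_def by (rule cSUP_least) auto

lemma ts_self: "a \<in> {0..1} \<Longrightarrow> ts a a = 0"
proof -
  assume a: "a \<in> {0..1}"
  have "ts a a \<le> 0"
    by (rule ts_least) (auto simp: tri_area_def tri_det_def det2_def)
  then show ?thesis using ts_nonneg[OF a a] by simp
qed

lemma tsa_nonneg: "0 \<le> tsa a b" by (simp add: tsa_def)

lemma three_point:
  assumes "a \<in> {0..1}" "b \<in> {0..1}" "u \<in> {a..b}"
  shows "norm (g a u + g u b - g a b) \<le> S * ts a b powr \<alpha>'"
proof -
  have u: "u \<in> {0..1}" using assms by auto
  define P where "P = (\<gamma> a, \<gamma> u, \<gamma> b)"
  define Q where "Q = (\<gamma> a, \<gamma> b, \<gamma> a)"
  have PT: "P \<in> triangles" "Q \<in> triangles" using gam_tri assms u by (auto simp: P_def Q_def)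
  have eq: "g a u + g u b - g a b = bdry A P - bdry A Q"
    using A_zero[OF Om gam_torus[OF assms(1)]] by (simp add: g_def bdry_def P_def Q_def)
  have "tri_area Q = 0" by (simp add: Q_def tri_area_def tri_det_def det2_def)
  then have nQ: "norm (bdry A Q) = 0"
    using symm_bound[OF Sd Om PT(2)] al by simp
  have "norm (bdry A P) \<le> S * tri_area P powr (\<alpha>'/2)"
    using symm_bound[OF Sd Om PT(1)] al by simp
  also have "tri_area P powr (\<alpha>'/2) = sqrt (tri_area P) powr \<alpha>'"
  proof -
    have "0 \<le> tri_area P" by (simp add: tri_area_def)
    then have "sqrt (tri_area P) = tri_area P powr (1/2)" by (simp add: powr_half_sqrt)
    then show ?thesis by (simp add: powr_powr)
  qed
  also have "sqrt (tri_area P) powr \<alpha>' \<le> ts a b powr \<alpha>'"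
    using ts_upper[OF assms] al by (intro powr_mono2) (auto simp: P_def tri_area_def)
  finally have "norm (bdry A P) \<le> S * ts a b powr \<alpha>'" using S0 by (simp add: mult_left_mono)
  then show ?thesis using eq nQ by (metis norm_triangle_ineq4 add.right_neutral order_trans)
qed

end


lemma sorted_hd_last:
  fixes xs :: "real list"
  assumes "sorted_wrt (<) xs" "y \<in> set xs"
  shows "hd xs \<le> y \<and> y \<le> last xs"
  using assms
proof (induction xs)
  case Nil then show ?case by simp
next
  case (Cons x xs)
  show ?case
  proof (cases "xs = []")
    case True then show ?thesis using Cons by simp
  next
    case False
    have "\<forall>z\<in>set xs. x < z" using Cons.prems by simp
    moreover have "last xs \<in> set xs" using False by simp
    ultimately show ?thesis using Cons False by (auto simp: less_imp_le)
  qed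
qed

lemma chain_cong_set: "F = F' \<Longrightarrow> chain f F = chain f F'" by simp

context ctx begin

definition om where "om a b = Sup ((chain tsa) ` {F. part a b F})"

lemma chain_tsa_nonneg: "0 \<le> chain tsa F"
  by (rule chain_nonneg) (rule tsa_nonneg)

lemma chain_sub_le:
  assumes F: "finite F'" "a \<in> F'" "b \<in> F'" "a \<le> b"
  shows "chain tsa {x\<in>F'. a \<le> x \<and> x \<le> b} \<le> chain tsa F'"
proof -
  have "chain tsa F' = chain tsa {x\<in>F'. x \<le> a} + chain tsa {x\<in>F'. a \<le> x}"
    using F by (intro chain_split) auto
  also have "chain tsa {x\<in>F'. a \<le> x} = chain tsa {y\<in>{x\<in>F'. a \<le> x}. y \<le> b} + chain tsa {y\<in>{x\<in>F'. a \<le> x}. b \<le> y}"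
    using F by (intro chain_split) auto
  also have "{y\<in>{x\<in>F'. a \<le> x}. y \<le> b} = {x\<in>F'. a \<le> x \<and> x \<le> b}" by auto
  finally show ?thesis using chain_tsa_nonneg
    by (smt (verit))
qed

lemma tsa_rpow: "(\<lambda>(a, b). rpow (tri_size \<gamma> a b) \<alpha>) = (\<lambda>(a,b). tsa a b)"
  using al by (auto simp: rpow_def tsa_def ts_def fun_eq_iff)

lemma chain_le_W:
  assumes "0 \<le> a" "b \<le> 1" "part a b F"
  shows "chain tsa F \<le> W"
proof -
  define F' where "F' = F \<union> {0, 1}"
  have fin: "finite F'" using assms by (simp add: F'_def part_def)
  have ab: "a \<le> b" "a \<in> F'" "b \<in> F'" using assms by (auto simp: F'_def part_def)
  have eqF: "{x\<in>F'. a \<le> x \<and> x \<le> b} = F"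
    using assms by (auto simp: F'_def part_def)
  have "chain tsa F \<le> chain tsa F'" using chain_sub_le[OF fin ab(2,3,1)] eqF by simp
  also have "chain tsa F' \<le> W"
  proof -
    obtain xs where xs: "sorted_wrt (<) xs" "set xs = F'"
      using finite_set_strict_sorted[OF fin] by blast
    have d: "distinct xs" using xs(1) strict_sorted_iff by blast
    have "card F' \<ge> 2"
    proof -
      have "{0, 1::real} \<subseteq> F'" by (auto simp: F'_def)
      then have "card {0,1::real} \<le> card F'" using fin by (rule card_mono[rotated])
      then show ?thesis by simp
    qed
    then have len: "2 \<le> length xs" using distinct_card[OF d] xs(2) by simp
    have ne: "xs \<noteq> []" using len by auto
    have rng: "y \<in> set xs \<Longrightarrow> 0 \<le> y \<and> y \<le> 1" for y
      using assms xs(2) by (auto simp: F'_def part_def)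
    have "hd xs = 0"
    proof -
      have "hd xs \<le> 0" using sorted_hd_last[OF xs(1), of 0] xs(2) by (auto simp: F'_def)
      moreover have "0 \<le> hd xs" using rng[of "hd xs"] ne by simp
      ultimately show ?thesis by simp
    qed
    moreover have "last xs = 1"
    proof -
      have "1 \<le> last xs" using sorted_hd_last[OF xs(1), of 1] xs(2) by (auto simp: F'_def)
      moreover have "last xs \<le> 1" using rng[of "last xs"] ne by simp
      ultimately show ?thesis by simp
    qed
    ultimately have "partition01 xs" using len xs(1) by (simp add: partition01_def)
    then have "ereal (sum_list (map (\<lambda>(a,b). rpow (tri_size \<gamma> a b) \<alpha>) (intervals xs))) \<le> alpha_var \<alpha> \<gamma>"
      unfolding alpha_var_def by (intro SUP_upper) simp
    then have "sum_list (map (\<lambda>(a,b). tsa a b) (intervals xs)) \<le> W"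
      using Wd tsa_rpow by simp
    then show ?thesis using list_chain[OF xs(1) ne, of tsa] xs(2) by simp
  qed
  finally show ?thesis .
qed

lemma om_bdd: "0 \<le> a \<Longrightarrow> b \<le> 1 \<Longrightarrow> bdd_above ((chain tsa) ` {F. part a b F})"
  using chain_le_W by (auto intro!: bdd_aboveI2)

lemma part_pair: "a \<le> b \<Longrightarrow> part a b {a, b}" by (auto simp: part_def)

lemma om_upper: "0 \<le> a \<Longrightarrow> b \<le> 1 \<Longrightarrow> part a b F \<Longrightarrow> chain tsa F \<le> om a b"
  unfolding om_def by (rule cSup_upper[OF _ om_bdd]) auto

lemma om_least: "a \<le> b \<Longrightarrow> (\<And>F. part a b F \<Longrightarrow> chain tsa F \<le> c) \<Longrightarrow> om a b \<le> c"
  unfolding om_def by (rule cSup_least) (use part_pair in auto)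

lemma om_le_W: "0 \<le> a \<Longrightarrow> a \<le> b \<Longrightarrow> b \<le> 1 \<Longrightarrow> om a b \<le> W"
  using om_least chain_le_W by blast

lemma tsa_le_om: assumes "0 \<le> a" "a \<le> b" "b \<le> 1" shows "tsa a b \<le> om a b"
proof (cases "a = b")
  case True
  then have "tsa a b = 0" using ts_self[of a] assms al by (simp add: tsa_def)
  then show ?thesis using om_upper[of a b "{a}"] assms True chain_single by (simp add: part_def)
next
  case False
  then have "chain tsa {a, b} = tsa a b" using assms by (intro chain_pair) simp
  then show ?thesis using om_upper[OF assms(1,3) part_pair[OF assms(2)]] by simp
qed

lemma om_nonneg: "0 \<le> a \<Longrightarrow> a \<le> b \<Longrightarrow> b \<le> 1 \<Longrightarrow> 0 \<le> om a b"
  using tsa_le_om tsa_nonneg order_trans by blast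

lemma chain_union:
  assumes "part a c F1" "part c b F2"
  shows "chain f (F1 \<union> F2) = chain f F1 + chain f F2" "part a b (F1 \<union> F2)"
proof -
  have fin: "finite (F1 \<union> F2)" "c \<in> F1 \<union> F2" using assms by (auto simp: part_def)
  have "{x\<in>F1 \<union> F2. x \<le> c} = F1" using assms by (auto simp: part_def)
  moreover have "{x\<in>F1 \<union> F2. c \<le> x} = F2" using assms by (auto simp: part_def)
  ultimately show "chain f (F1 \<union> F2) = chain f F1 + chain f F2"
    using chain_split[OF fin, of f] by simp
  have "a \<le> c" "c \<le> b" using assms by (auto simp: part_def)
  then have "{a..c} \<union> {c..b} \<subseteq> {a..b}" by auto
  moreover have "F1 \<union> F2 \<subseteq> {a..c} \<union> {c..b}" using assms by (auto simp: part_def)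
  ultimately show "part a b (F1 \<union> F2)" using assms unfolding part_def by blast
qed

lemma om_super:
  assumes "0 \<le> a" "a \<le> c" "c \<le> b" "b \<le> 1"
  shows "om a c + om c b \<le> om a b"
proof -
  have "om c b \<le> om a b - om a c"
  proof (rule om_least[OF assms(3)])
    fix F2 assume F2: "part c b F2"
    have "om a c \<le> om a b - chain tsa F2"
    proof (rule om_least[OF assms(2)])
      fix F1 assume F1: "part a c F1"
      have "chain tsa F1 + chain tsa F2 \<le> om a b"
        using chain_union(1)[OF F1 F2, of tsa] om_upper[OF assms(1,4) chain_union(2)[OF F1 F2]] by simp
      then show "chain tsa F1 \<le> om a b - chain tsa F2" by simp
    qed
    then show "chain tsa F2 \<le> om a b - om a c" by simp
  qed
  then show ?thesis by simp
qed

lemma om_mono: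
  assumes "0 \<le> a" "a \<le> a'" "a' \<le> b'" "b' \<le> b" "b \<le> 1"
  shows "om a' b' \<le> om a b"
proof -
  have "om a a' + om a' b \<le> om a b" using assms by (intro om_super) auto
  moreover have "om a' b' + om b' b \<le> om a' b" using assms by (intro om_super) auto
  moreover have "0 \<le> om a a'" "0 \<le> om b' b" using assms by (auto intro: om_nonneg)
  ultimately show ?thesis by linarith
qed

lemma om_near_sub:
  assumes "0 \<le> a" "a \<le> c" "c \<le> b" "b \<le> 1"
    and T: "\<And>p q. a \<le> p \<Longrightarrow> p \<le> q \<Longrightarrow> q \<le> b \<Longrightarrow> tsa p q \<le> T"
  shows "om a b \<le> om a c + om c b + T"
proof (rule om_least)
  show "a \<le> b" using assms by simp
  fix F assume F: "part a b F"
  have T0: "0 \<le> T" using T[of a a] assms tsa_nonneg[of a a] by linarith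
  have fin: "finite F" using F by (simp add: part_def)
  show "chain tsa F \<le> om a c + om c b + T"
  proof (cases "c \<in> F")
    case True
    have "chain tsa F = chain tsa {x\<in>F. x \<le> c} + chain tsa {x\<in>F. c \<le> x}"
      using fin True by (rule chain_split)
    moreover have "chain tsa {x\<in>F. x \<le> c} \<le> om a c"
      using F True assms by (intro om_upper) (auto simp: part_def)
    moreover have "chain tsa {x\<in>F. c \<le> x} \<le> om c b"
      using F True assms by (intro om_upper) (auto simp: part_def)
    ultimately show ?thesis using T0 by linarith
  next
    case False
    define L where "L = {x\<in>F. x < c}"
    define R where "R = {x\<in>F. c < x}"
    have aL: "a \<in> L" using F False assms by (auto simp: L_def part_def order.order_iff_strict)
    have bR: "b \<in> R" using F False assms by (auto simp: R_def part_def order.order_iff_strict)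
    have finL: "finite L" "finite R" using fin by (auto simp: L_def R_def)
    define p where "p = Max L"
    define q where "q = Min R"
    have pL: "p \<in> L" using Max_in[OF finL(1)] aL by (auto simp: p_def)
    have qR: "q \<in> R" using Min_in[OF finL(2)] bR by (auto simp: q_def)
    have pmax: "\<And>x. x \<in> F \<Longrightarrow> x < c \<Longrightarrow> x \<le> p" using finL by (auto simp: p_def L_def)
    have qmin: "\<And>x. x \<in> F \<Longrightarrow> c < x \<Longrightarrow> q \<le> x" using finL by (auto simp: q_def R_def)
    have pc: "p < c" "p \<in> F" using pL by (auto simp: L_def)
    have qc: "c < q" "q \<in> F" using qR by (auto simp: R_def)
    have rng: "\<And>x. x \<in> F \<Longrightarrow> a \<le> x \<and> x \<le> b" using F by (auto simp: part_def)
    have "chain tsa F = chain tsa {x\<in>F. x \<le> p} + chain tsa {x\<in>F. p \<le> x}"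
      using fin pc(2) by (rule chain_split)
    also have "chain tsa {x\<in>F. p \<le> x} = chain tsa {y\<in>{x\<in>F. p \<le> x}. y \<le> q} + chain tsa {y\<in>{x\<in>F. p \<le> x}. q \<le> y}"
      using fin qc pc by (intro chain_split) auto
    also have "{y\<in>{x\<in>F. p \<le> x}. y \<le> q} = {p, q}"
    proof -
      have "x \<in> F \<Longrightarrow> p \<le> x \<Longrightarrow> x \<le> q \<Longrightarrow> x = p \<or> x = q" for x
        using pmax[of x] qmin[of x] False by (cases "x < c") (auto, (metis order.antisym not_less)+)
      then show ?thesis using pc qc by auto
    qed
    also have "chain tsa {p, q} = tsa p q" using pc qc by (intro chain_pair) simp
    also have "{y\<in>{x\<in>F. p \<le> x}. q \<le> y} = {x\<in>F. q \<le> x}" using pc qc by auto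
    finally have eq: "chain tsa F = chain tsa {x\<in>F. x \<le> p} + tsa p q + chain tsa {x\<in>F. q \<le> x}" by simp
    have c1: "chain tsa {x\<in>F. x \<le> p} \<le> om a c"
    proof -
      define F1 where "F1 = insert c {x\<in>F. x \<le> p}"
      have "chain tsa F1 = chain tsa {y\<in>F1. y \<le> p} + chain tsa {y\<in>F1. p \<le> y}"
        using fin pc by (intro chain_split) (auto simp: F1_def)
      also have "{y\<in>F1. y \<le> p} = {x\<in>F. x \<le> p}" using pc by (auto simp: F1_def)
      also have "{y\<in>F1. p \<le> y} = {p, c}" using pc by (auto simp: F1_def)
      also have "chain tsa {p, c} = tsa p c" using pc by (intro chain_pair) simp
      finally have "chain tsa {x\<in>F. x \<le> p} \<le> chain tsa F1" using tsa_nonneg[of p c] by simp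
      also have "chain tsa F1 \<le> om a c"
        using assms fin pc rng aL by (intro om_upper) (auto simp: F1_def part_def L_def)
      finally show ?thesis .
    qed
    have c2: "chain tsa {x\<in>F. q \<le> x} \<le> om c b"
    proof -
      define F2 where "F2 = insert c {x\<in>F. q \<le> x}"
      have mq: "Min {x\<in>F. q \<le> x} = q" using fin qc by (intro Min_eqI) auto
      have "chain tsa F2 = tsa c (Min {x\<in>F. q \<le> x}) + chain tsa {x\<in>F. q \<le> x}"
        unfolding F2_def using fin qc mq by (intro chain_insert_min) auto
      then have "chain tsa {x\<in>F. q \<le> x} \<le> chain tsa F2" using tsa_nonneg[of c q] mq by simp
      also have "chain tsa F2 \<le> om c b"
        using assms fin qc rng bR by (intro om_upper) (auto simp: F2_def part_def R_def)
      finally show ?thesis .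
    qed
    have "tsa p q \<le> T" using rng pc qc by (intro T) auto
    then show ?thesis using eq c1 c2 by linarith
  qed
qed

end


lemma strict_seq_less:
  fixes x :: "nat \<Rightarrow> real"
  assumes "\<forall>i<n. x i < x (Suc i)" "i < j" "j \<le> n"
  shows "x i < x j"
  using assms(2,3)
proof (induction j)
  case 0 then show ?case by simp
next
  case (Suc j)
  show ?case
  proof (cases "i = j")
    case True then show ?thesis using assms(1) Suc by simp
  next
    case False
    then have "x i < x j" using Suc by simp
    also have "x j < x (Suc j)" using assms(1) Suc by simp
    finally show ?thesis .
  qed
qed

lemma strict_seq_le:
  fixes x :: "nat \<Rightarrow> real"
  assumes "\<forall>i<n. x i < x (Suc i)" "i \<le> j" "j \<le> n"
  shows "x i \<le> x j"
  using strict_seq_less[OF assms(1)] assms(2,3) by (cases "i = j") (auto intro: less_imp_le)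

lemma remove_sum:
  fixes F :: "real \<Rightarrow> real \<Rightarrow> 'a::ab_group_add" and x :: "nat \<Rightarrow> real" and j k :: nat
  defines "y \<equiv> \<lambda>i. if i < Suc j then x i else x (Suc i)"
  shows "(\<Sum>i<Suc (Suc j) + k. F (x i) (x (Suc i))) =
         (\<Sum>i<Suc j + k. F (y i) (y (Suc i))) + F (x j) (x (Suc j)) + F (x (Suc j)) (x (Suc (Suc j)))
           - F (x j) (x (Suc (Suc j)))"
proof (induction k)
  case 0
  have e: "(\<Sum>i<j. F (y i) (y (Suc i))) = (\<Sum>i<j. F (x i) (x (Suc i)))"
    by (rule sum.cong) (auto simp: y_def)
  have "(\<Sum>i<Suc j. F (y i) (y (Suc i))) = (\<Sum>i<j. F (x i) (x (Suc i))) + F (x j) (x (Suc (Suc j)))"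
    using e by (simp add: y_def)
  then show ?case by simp
next
  case (Suc k)
  have "(\<Sum>i<Suc (Suc j) + Suc k. F (x i) (x (Suc i))) = (\<Sum>i<Suc (Suc j) + k. F (x i) (x (Suc i))) + F (x (Suc (Suc j) + k)) (x (Suc (Suc (Suc j) + k)))"
    by simp
  moreover have "(\<Sum>i<Suc j + Suc k. F (y i) (y (Suc i))) = (\<Sum>i<Suc j + k. F (y i) (y (Suc i))) + F (x (Suc (Suc j) + k)) (x (Suc (Suc (Suc j) + k)))"
    by (simp add: y_def)
  ultimately show ?case using Suc.IH by (simp add: algebra_simps)
qed

lemma zeta_summable: "1 < s \<Longrightarrow> summable (\<lambda>n. 1 / real (Suc n) powr s)"
proof -
  assume s: "1 < s"
  have "summable (\<lambda>n. real n powr (- s))" using s by (simp add: summable_real_powr_iff)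
  then have "summable (\<lambda>n. real (Suc n) powr (- s))" by (subst summable_Suc_iff)
  then show ?thesis by (simp add: powr_minus_divide)
qed

lemma zeta_partial: "1 < s \<Longrightarrow> (\<Sum>k=1..N. 1 / real k powr s) \<le> zeta_real s"
proof -
  assume s: "1 < s"
  have "(\<Sum>k=1..N. 1 / real k powr s) = (\<Sum>i<N. 1 / real (Suc i) powr s)"
  proof -
    have "(\<Sum>k=1..N. 1 / real k powr s) = (\<Sum>i\<in>{0..<N}. 1 / real (Suc i) powr s)"
      by (rule sum.reindex_bij_witness[of _ Suc "\<lambda>k. k - 1"]) auto
    then show ?thesis by (simp add: lessThan_atLeast0)
  qed
  also have "\<dots> \<le> zeta_real s" unfolding zeta_real_def
    by (rule sum_le_suminf[OF zeta_summable[OF s]]) auto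
  finally show ?thesis .
qed

context ctx begin

lemma two_chains:
  assumes "\<forall>i<n. x i < x (Suc i)" "0 \<le> x 0" "x n \<le> 1" "1 \<le> n"
  shows "(\<Sum>j\<in>{1..<n}. om (x (j - 1)) (x (Suc j))) \<le> om (x 0) (x n) + om (x 0) (x (n - 1))"
  using assms
proof (induction n)
  case 0 then show ?case by simp
next
  case (Suc m)
  have le: "\<And>i j. i \<le> j \<Longrightarrow> j \<le> Suc m \<Longrightarrow> x i \<le> x j"
    using strict_seq_le[OF Suc.prems(1)] by blast
  have rng: "\<And>i. i \<le> Suc m \<Longrightarrow> 0 \<le> x i \<and> x i \<le> 1"
  proof -
    fix i :: nat assume "i \<le> Suc m"
    then show "0 \<le> x i \<and> x i \<le> 1" using le[of 0 i] le[of i "Suc m"] Suc.prems(2,3) by simp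
  qed
  show ?case
  proof (cases "m = 0")
    case True
    then show ?thesis using om_nonneg[of "x 0" "x 1"] om_nonneg[of "x 0" "x 0"] rng[of 0] rng[of 1] le[of 0 1] by simp
  next
    case False
    have IH: "(\<Sum>j\<in>{1..<m}. om (x (j - 1)) (x (Suc j))) \<le> om (x 0) (x m) + om (x 0) (x (m - 1))"
      using Suc.IH Suc.prems False rng[of m] by simp
    have "{1..<Suc m} = insert m {1..<m}" using False by auto
    then have "(\<Sum>j\<in>{1..<Suc m}. om (x (j - 1)) (x (Suc j))) = om (x (m - 1)) (x (Suc m)) + (\<Sum>j\<in>{1..<m}. om (x (j - 1)) (x (Suc j)))"
      by simp
    moreover have "om (x 0) (x (m - 1)) + om (x (m - 1)) (x (Suc m)) \<le> om (x 0) (x (Suc m))"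
      using rng le by (intro om_super) auto
    ultimately show ?thesis using IH by simp
  qed
qed

lemma ts_pow: "0 \<le> ts a b \<Longrightarrow> ts a b powr \<alpha>' = tsa a b powr \<theta>"
  using al by (simp add: tsa_def \<theta>_def powr_powr)

lemma sew_seq:
  "\<And>x. \<forall>i<n. x i < x (Suc i) \<Longrightarrow> 0 \<le> x 0 \<Longrightarrow> x n \<le> 1 \<Longrightarrow>
    norm ((\<Sum>i<n. g (x i) (x (Suc i))) - g (x 0) (x n))
      \<le> S * (\<Sum>k=1..n-1. (2 * om (x 0) (x n) / real k) powr \<theta>)"
proof (induction n)
  case 0 then show ?case by simp
next
  case (Suc m)
  note mono = Suc.prems(1)
  have le: "\<And>i j. i \<le> j \<Longrightarrow> j \<le> Suc m \<Longrightarrow> x i \<le> x j"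
    using strict_seq_le[OF mono] by blast
  have rng: "\<And>i. i \<le> Suc m \<Longrightarrow> 0 \<le> x i \<and> x i \<le> 1"
  proof -
    fix i :: nat assume "i \<le> Suc m"
    then show "0 \<le> x i \<and> x i \<le> 1" using le[of 0 i] le[of i "Suc m"] Suc.prems(2,3) by simp
  qed
  define \<Omega> where "\<Omega> = om (x 0) (x (Suc m))"
  show ?case
  proof (cases "m = 0")
    case True then show ?thesis by simp
  next
    case False
    define f where "f j = tsa (x (j - 1)) (x (Suc j))" for j
    have fin: "finite (f ` {1..m})" "f ` {1..m} \<noteq> {}" using False by auto
    obtain j0 where j0: "j0 \<in> {1..m}" "f j0 = Min (f ` {1..m})"
      using Min_in[OF fin] by auto
    have fmin: "\<And>j. j \<in> {1..m} \<Longrightarrow> f j0 \<le> f j" using j0 fin by simp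
    have "real m * f j0 \<le> (\<Sum>j\<in>{1..m}. f j)"
      using sum_bounded_below[of "{1..m}" "f j0" f] fmin by simp
    also have "\<dots> \<le> (\<Sum>j\<in>{1..<Suc m}. om (x (j - 1)) (x (Suc j)))"
      unfolding f_def atLeastLessThanSuc_atLeastAtMost
    proof (rule sum_mono)
      fix j assume j: "j \<in> {1..m}"
      show "tsa (x (j - 1)) (x (Suc j)) \<le> om (x (j - 1)) (x (Suc j))"
        using rng[of "j - 1"] rng[of "Suc j"] le[of "j - 1" "Suc j"] j by (intro tsa_le_om) auto
    qed
    also have "\<dots> \<le> om (x 0) (x (Suc m)) + om (x 0) (x (Suc m - 1))"
      using two_chains[OF mono] Suc.prems by simp
    also have "om (x 0) (x (Suc m - 1)) \<le> om (x 0) (x (Suc m))"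
      using rng le by (intro om_mono) auto
    finally have fj0: "f j0 \<le> 2 * \<Omega> / real m"
      using False by (simp add: \<Omega>_def field_simps)
    obtain j' where j': "j0 = Suc j'" using j0 by (cases j0) auto
    obtain k where k: "Suc m = Suc (Suc j') + k" using j0 j' by (metis atLeastAtMost_iff le_Suc_ex Suc_le_mono)
    define y where "y i = (if i < Suc j' then x i else x (Suc i))" for i
    have ymono: "\<forall>i<m. y i < y (Suc i)"
    proof (intro allI impI)
      fix i assume i: "i < m"
      consider "Suc i < Suc j'" | "Suc i = Suc j'" | "Suc j' < Suc i" by linarith
      then show "y i < y (Suc i)"
      proof cases
        case 1 then show ?thesis using mono i by (simp add: y_def)
      next
        case 2 then show ?thesis using strict_seq_less[OF mono, of i "Suc (Suc i)"] i by (simp add: y_def)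
      next
        case 3 then show ?thesis using mono i by (simp add: y_def)
      qed
    qed
    have y0: "y 0 = x 0" by (simp add: y_def)
    have ym: "y m = x (Suc m)" using k by (simp add: y_def)
    have IH: "norm ((\<Sum>i<m. g (y i) (y (Suc i))) - g (x 0) (x (Suc m)))
        \<le> S * (\<Sum>k=1..m-1. (2 * \<Omega> / real k) powr \<theta>)"
      using Suc.IH[OF ymono] y0 ym rng[of 0] rng[of "Suc m"] by (simp add: \<Omega>_def)
    have rem: "(\<Sum>i<Suc m. g (x i) (x (Suc i))) = (\<Sum>i<m. g (y i) (y (Suc i)))
        + (g (x j') (x (Suc j')) + g (x (Suc j')) (x (Suc (Suc j'))) - g (x j') (x (Suc (Suc j'))))"
      using remove_sum[of g x j' k] k unfolding y_def by simp
    have tp3: "norm (g (x j') (x (Suc j')) + g (x (Suc j')) (x (Suc (Suc j'))) - g (x j') (x (Suc (Suc j'))))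
        \<le> S * (2 * \<Omega> / real m) powr \<theta>"
    proof -
      have a: "x j' \<in> {0..1}" "x (Suc (Suc j')) \<in> {0..1}" "x (Suc j') \<in> {x j'..x (Suc (Suc j'))}"
        using rng[of j'] rng[of "Suc (Suc j')"] le[of j' "Suc j'"] le[of "Suc j'" "Suc (Suc j')"] k by auto
      have "norm (g (x j') (x (Suc j')) + g (x (Suc j')) (x (Suc (Suc j'))) - g (x j') (x (Suc (Suc j'))))
          \<le> S * ts (x j') (x (Suc (Suc j'))) powr \<alpha>'" by (rule three_point[OF a])
      also have "ts (x j') (x (Suc (Suc j'))) powr \<alpha>' = f j0 powr \<theta>"
        using ts_nonneg[OF a(1,2)] a(3) j' by (simp add: f_def ts_pow)
      also have "f j0 powr \<theta> \<le> (2 * \<Omega> / real m) powr \<theta>"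
        using fj0 theta_gt1 by (intro powr_mono2) (auto simp: f_def tsa_nonneg)
      finally show ?thesis using S0 by (simp add: mult_left_mono)
    qed
    have "norm ((\<Sum>i<Suc m. g (x i) (x (Suc i))) - g (x 0) (x (Suc m)))
        \<le> norm ((\<Sum>i<m. g (y i) (y (Suc i))) - g (x 0) (x (Suc m)))
          + norm (g (x j') (x (Suc j')) + g (x (Suc j')) (x (Suc (Suc j'))) - g (x j') (x (Suc (Suc j'))))"
      unfolding rem by (rule order_trans[OF _ norm_triangle_ineq]) (simp add: algebra_simps)
    also have "\<dots> \<le> S * (\<Sum>k=1..m-1. (2 * \<Omega> / real k) powr \<theta>) + S * (2 * \<Omega> / real m) powr \<theta>"
      using IH tp3 by simp
    also have "\<dots> = S * (\<Sum>k=1..m. (2 * \<Omega> / real k) powr \<theta>)"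
    proof -
      have "{1..m} = insert m {1..m-1}" using False by auto
      moreover have "(\<Sum>k\<in>insert m {1..m-1}. (2 * \<Omega> / real k) powr \<theta>) = (2 * \<Omega> / real m) powr \<theta> + (\<Sum>k=1..m-1. (2 * \<Omega> / real k) powr \<theta>)"
        using False by (intro sum.insert) auto
      ultimately show ?thesis by (simp add: algebra_simps)
    qed
    finally show ?thesis by (simp add: \<Omega>_def)
  qed
qed

definition K where "K = S * 2 powr \<theta> * zeta_real \<theta>"

lemma sew_seq2:
  assumes "\<forall>i<n. x i < x (Suc i)" "0 \<le> x 0" "x n \<le> 1"
  shows "norm ((\<Sum>i<n. g (x i) (x (Suc i))) - g (x 0) (x n)) \<le> K * om (x 0) (x n) powr \<theta>"
proof -
  have o: "0 \<le> om (x 0) (x n)" using om_nonneg assms strict_seq_le[OF assms(1), of 0 n] by simp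
  have "(\<Sum>k=1..n-1. (2 * om (x 0) (x n) / real k) powr \<theta>) = (2 * om (x 0) (x n)) powr \<theta> * (\<Sum>k=1..n-1. 1 / real k powr \<theta>)"
  proof -
    have "\<And>k. (2 * om (x 0) (x n) / real k) powr \<theta> = (2 * om (x 0) (x n)) powr \<theta> * (1 / real k powr \<theta>)"
      by (subst powr_divide) simp
    then show ?thesis by (simp add: sum_distrib_left)
  qed
  also have "\<dots> \<le> (2 * om (x 0) (x n)) powr \<theta> * zeta_real \<theta>"
    using zeta_partial[OF theta_gt1] by (intro mult_left_mono) auto
  also have "(2 * om (x 0) (x n)) powr \<theta> = 2 powr \<theta> * om (x 0) (x n) powr \<theta>"
    using o by (simp add: powr_mult)
  finally have E: "(\<Sum>k=1..n-1. (2 * om (x 0) (x n) / real k) powr \<theta>) \<le> 2 powr \<theta> * om (x 0) (x n) powr \<theta> * zeta_real \<theta>" .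
  have "S * (\<Sum>k=1..n-1. (2 * om (x 0) (x n) / real k) powr \<theta>) \<le> S * (2 powr \<theta> * om (x 0) (x n) powr \<theta> * zeta_real \<theta>)"
    using S0 E by (rule mult_left_mono[rotated])
  also have "\<dots> = K * om (x 0) (x n) powr \<theta>" unfolding K_def by (simp add: algebra_simps)
  finally have "S * (\<Sum>k=1..n-1. (2 * om (x 0) (x n) / real k) powr \<theta>) \<le> K * om (x 0) (x n) powr \<theta>" .
  then show ?thesis using sew_seq[OF assms] by linarith
qed

lemma sew_chain:
  assumes "part s t F" "0 \<le> s" "t \<le> 1"
  shows "norm (chain g F - g s t) \<le> K * om s t powr \<theta>"
proof -
  have fin: "finite F" using assms by (simp add: part_def)
  obtain xs where xs: "sorted_wrt (<) xs" "set xs = F"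
    using finite_set_strict_sorted[OF fin] by blast
  have ne: "xs \<noteq> []" using xs assms by (auto simp: part_def)
  define n where "n = length xs - 1"
  have rngF: "\<And>y. y \<in> F \<Longrightarrow> s \<le> y \<and> y \<le> t" using assms by (auto simp: part_def)
  have h: "hd xs = s"
    using sorted_hd_last[OF xs(1), of s] sorted_hd_last[OF xs(1), of "hd xs"] rngF[of "hd xs"] xs(2) assms ne
    by (auto simp: part_def)
  have l: "last xs = t"
    using sorted_hd_last[OF xs(1), of t] sorted_hd_last[OF xs(1), of "last xs"] rngF[of "last xs"] xs(2) assms ne
    by (auto simp: part_def)
  have x0: "xs ! 0 = s" using h ne by (simp add: hd_conv_nth)
  have xn: "xs ! n = t" using l ne by (simp add: n_def last_conv_nth)
  have mono: "\<forall>i<n. xs ! i < xs ! Suc i"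
    using xs(1) by (auto simp: n_def sorted_wrt_iff_nth_less)
  have ch: "chain g F = (\<Sum>i<n. g (xs ! i) (xs ! Suc i))"
    using chain_seq[OF xs(1) ne, of g] xs(2) by (simp add: n_def)
  have "norm ((\<Sum>i<n. g (xs ! i) (xs ! Suc i)) - g (xs ! 0) (xs ! n)) \<le> K * om (xs ! 0) (xs ! n) powr \<theta>"
  proof -
    have a: "0 \<le> xs ! 0" using x0 assms(2) by simp
    have b: "xs ! n \<le> 1" using xn assms(3) by simp
    show ?thesis using sew_seq2[of n "\<lambda>i. xs ! i", OF mono a b] .
  qed
  then show ?thesis unfolding ch x0 xn .
qed

end


context ctx begin

lemma gam_uc: "\<exists>\<delta>>0. \<forall>s\<in>{0..1}. \<forall>t\<in>{0..1}. \<bar>s - t\<bar> < \<delta> \<longrightarrow> tdist (\<gamma> s) (\<gamma> t) < \<epsilon>"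
  if eps: "0 < \<epsilon>"
proof -
  have tc: "\<forall>t\<in>{0..1}. \<forall>\<epsilon>>0. \<exists>\<delta>>0. \<forall>s\<in>{0..1}. \<bar>s - t\<bar> < \<delta> \<longrightarrow> tdist (\<gamma> s) (\<gamma> t) < \<epsilon>"
    using tp unfolding torus_path_def by blast
  have e2: "\<epsilon>/2 > 0" using eps by simp
  have pc: "\<forall>x\<in>{0..1}. \<exists>r>0. \<forall>s\<in>{0..1}. \<bar>s - x\<bar> < r \<longrightarrow> tdist (\<gamma> s) (\<gamma> x) < \<epsilon>/2"
    using tc e2 by blast
  then obtain r where r0: "\<forall>x\<in>{0..1}. r x > 0 \<and> (\<forall>s\<in>{0..1}. \<bar>s - x\<bar> < r x \<longrightarrow> tdist (\<gamma> s) (\<gamma> x) < \<epsilon>/2)"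
    using bchoice[OF pc] by blast
  then have r: "\<And>x. x \<in> {0..1} \<Longrightarrow> r x > 0 \<and> (\<forall>s\<in>{0..1}. \<bar>s - x\<bar> < r x \<longrightarrow> tdist (\<gamma> s) (\<gamma> x) < \<epsilon>/2)"
    by blast
  have cov: "{0..1::real} \<subseteq> \<Union> ((\<lambda>x. ball x (r x)) ` {0..1})"
  proof
    fix y :: real assume y: "y \<in> {0..1}"
    then have "y \<in> ball y (r y)" using r[OF y] by simp
    then show "y \<in> \<Union> ((\<lambda>x. ball x (r x)) ` {0..1})" using y by blast
  qed
  obtain e where e: "0 < e" "\<And>s. s \<in> {0..1::real} \<Longrightarrow> \<exists>G \<in> (\<lambda>x. ball x (r x)) ` {0..1}. ball s e \<subseteq> G"
    using Heine_Borel_lemma[OF compact_Icc cov] by blast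
  show ?thesis
  proof (intro exI[of _ e] conjI ballI impI e(1))
    fix s t :: real assume s: "s \<in> {0..1}" and t: "t \<in> {0..1}" and st: "\<bar>s - t\<bar> < e"
    obtain x where x: "x \<in> {0..1}" "ball s e \<subseteq> ball x (r x)" using e(2)[OF s] by blast
    have "s \<in> ball s e" "t \<in> ball s e" using st e(1) by (auto simp: dist_real_def)
    then have "s \<in> ball x (r x)" "t \<in> ball x (r x)" using x(2) by blast+
    then have "\<bar>s - x\<bar> < r x" "\<bar>t - x\<bar> < r x" by (auto simp: dist_real_def abs_minus_commute)
    then have "tdist (\<gamma> s) (\<gamma> x) < \<epsilon>/2" "tdist (\<gamma> t) (\<gamma> x) < \<epsilon>/2" using r[OF x(1)] s t by auto
    then show "tdist (\<gamma> s) (\<gamma> t) < \<epsilon>"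
      using tdist_triangle[of "\<gamma> s" "\<gamma> t" "\<gamma> x"] tdist_sym[of "\<gamma> x" "\<gamma> t"] by linarith
  qed
qed

lemma tsa_small: "\<exists>\<delta>>0. \<forall>p q. 0 \<le> p \<longrightarrow> p \<le> q \<longrightarrow> q \<le> 1 \<longrightarrow> q - p < \<delta> \<longrightarrow> tsa p q < \<epsilon>"
  if eps: "0 < \<epsilon>"
proof -
  define e1 where "e1 = (\<epsilon>/2) powr (1/\<alpha>)"
  have e1: "0 < e1" using eps by (simp add: e1_def)
  have e1a: "e1 powr \<alpha> = \<epsilon>/2" using eps al by (simp add: e1_def powr_powr)
  obtain \<delta> where d: "\<delta> > 0" "\<forall>s\<in>{0..1}. \<forall>t\<in>{0..1}. \<bar>s - t\<bar> < \<delta> \<longrightarrow> tdist (\<gamma> s) (\<gamma> t) < e1"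
    using gam_uc[OF e1] by blast
  show ?thesis
  proof (intro exI[of _ \<delta>] conjI allI impI d(1))
    fix p q :: real assume pq: "0 \<le> p" "p \<le> q" "q \<le> 1" "q - p < \<delta>"
    have "ts p q \<le> e1"
    proof (rule ts_least[OF pq(2)])
      fix u assume u: "u \<in> {p..q}"
      have "tdist (\<gamma> p) (\<gamma> u) < e1" "tdist (\<gamma> p) (\<gamma> q) < e1"
        using d(2) u pq by auto
      then have "tdist (\<gamma> p) (\<gamma> u) * tdist (\<gamma> p) (\<gamma> q) \<le> e1 * e1"
        using tdist_nonneg[of "\<gamma> p" "\<gamma> u"] tdist_nonneg[of "\<gamma> p" "\<gamma> q"] by (intro mult_mono) auto
      then have "tri_area (\<gamma> p, \<gamma> u, \<gamma> q) \<le> e1 * e1"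
        using area_bound[of "\<gamma> p" "\<gamma> u" "\<gamma> q"] e1 mult_pos_pos[OF e1 e1] by linarith
      then have "sqrt (tri_area (\<gamma> p, \<gamma> u, \<gamma> q)) \<le> sqrt (e1 * e1)" by (rule real_sqrt_le_mono)
      then show "sqrt (tri_area (\<gamma> p, \<gamma> u, \<gamma> q)) \<le> e1" using e1 by simp
    qed
    then have "tsa p q \<le> e1 powr \<alpha>"
      unfolding tsa_def using ts_nonneg[of p q] pq al by (intro powr_mono2) auto
    then show "tsa p q < \<epsilon>" using e1a eps by simp
  qed
qed

lemma om_self: "0 \<le> a \<Longrightarrow> a \<le> 1 \<Longrightarrow> om a a = 0"
proof -
  assume a: "0 \<le> a" "a \<le> 1"
  have "om a a \<le> 0"
  proof (rule om_least)
    fix F assume "part a a F"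
    then have "F = {a}" by (auto simp: part_def)
    then show "chain tsa F \<le> 0" by simp
  qed simp
  then show ?thesis using om_nonneg[of a a] a by simp
qed

lemma om_approx:
  assumes "0 \<le> a" "a \<le> b" "b \<le> 1" "y < om a b"
  obtains F where "part a b F" "y < chain tsa F"
proof -
  have "\<exists>z\<in>(chain tsa) ` {F. part a b F}. y < z"
    using assms(4) unfolding om_def
    by (intro less_cSupD) (use part_pair[OF assms(2)] in auto)
  then show ?thesis using that by auto
qed

lemma om_left: "\<exists>h>0. \<forall>a. 0 \<le> a \<longrightarrow> x - h < a \<longrightarrow> a \<le> x \<longrightarrow> om a x < \<epsilon>"
  if x: "0 \<le> x" "x \<le> 1" and eps: "0 < \<epsilon>"
proof (cases "x = 0")
  case True
  then show ?thesis using om_self[of 0] eps by (intro exI[of _ 1]) auto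
next
  case False
  then have xp: "0 < x" using x by simp
  obtain \<delta>0 where d0: "\<delta>0 > 0" "\<forall>p q. 0 \<le> p \<longrightarrow> p \<le> q \<longrightarrow> q \<le> 1 \<longrightarrow> q - p < \<delta>0 \<longrightarrow> tsa p q < \<epsilon>/4"
    using tsa_small[of "\<epsilon>/4"] eps by auto
  show ?thesis
  proof (rule ccontr)
    assume "\<not> ?thesis"
    then have H: "\<And>h. 0 < h \<Longrightarrow> \<exists>a. 0 \<le> a \<and> x - h < a \<and> a \<le> x \<and> \<epsilon> \<le> om a x" by (meson not_less)
    have H2: "\<epsilon> \<le> om (x - h) x" if h: "0 < h" "h \<le> x" for h
    proof -
      obtain a where a: "0 \<le> a" "x - h < a" "a \<le> x" "\<epsilon> \<le> om a x" using H[OF h(1)] by blast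
      have "om a x \<le> om (x - h) x" using a h x by (intro om_mono) auto
      then show ?thesis using a by simp
    qed
    have claim: "\<forall>h. 0 < h \<longrightarrow> h \<le> x \<longrightarrow> h < \<delta>0 \<longrightarrow> real n * (\<epsilon>/2) \<le> om (x - h) x" for n
    proof (induction n)
      case 0 then show ?case using om_nonneg x by simp
    next
      case (Suc n)
      show ?case
      proof (intro allI impI)
        fix h assume h: "0 < h" "h \<le> x" "h < \<delta>0"
        have "3 * \<epsilon> / 4 < om (x - h) x" using H2[OF h(1,2)] eps by simp
        then have c: "3 * \<epsilon> / 4 < om (x - h) x" .
        have a1: "0 \<le> x - h" "x - h \<le> x" using h by auto
        obtain F where F: "part (x - h) x F" "3 * \<epsilon> / 4 < chain tsa F"
          using om_approx[OF a1 x(2) c] by blast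
        have fin: "finite F" using F by (simp add: part_def)
        have ne: "x - h \<in> F - {x}" using F h by (auto simp: part_def)
        define p where "p = Max (F - {x})"
        have "p \<in> F - {x}" unfolding p_def using fin ne by (intro Max_in) auto
        then have pF: "p \<in> F" "p \<noteq> x" by auto
        have pmax: "\<And>y. y \<in> F \<Longrightarrow> y \<noteq> x \<Longrightarrow> y \<le> p" using fin by (auto simp: p_def)
        have rngF: "\<And>y. y \<in> F \<Longrightarrow> x - h \<le> y \<and> y \<le> x" using F by (auto simp: part_def)
        have px: "p < x" using rngF[OF pF(1)] pF(2) by simp
        have ph: "x - h \<le> p" using rngF[OF pF(1)] by simp
        have "chain tsa F = chain tsa {y\<in>F. y \<le> p} + chain tsa {y\<in>F. p \<le> y}"
          using fin pF(1) by (rule chain_split)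
        also have "{y\<in>F. p \<le> y} = {p, x}"
          using pmax pF px F by (auto simp: part_def intro: order.antisym)
        also have "chain tsa {p, x} = tsa p x" using px by (rule chain_pair)
        finally have ce: "chain tsa F = chain tsa {y\<in>F. y \<le> p} + tsa p x" .
        have "tsa p x < \<epsilon>/4" using d0(2) ph px h x by auto
        then have big: "\<epsilon>/2 < chain tsa {y\<in>F. y \<le> p}" using ce F(2) by simp
        have "p \<noteq> x - h"
        proof
          assume "p = x - h"
          then have "{y\<in>F. y \<le> p} = {x - h}" using rngF F by (auto simp: part_def intro: order.antisym)
          then show False using big eps by simp
        qed
        then have ph': "x - h < p" using ph by simp
        have pt: "part (x - h) p {y\<in>F. y \<le> p}" using F pF ph by (auto simp: part_def)
        have o1: "\<epsilon>/2 < om (x - h) p" using big om_upper[OF _ _ pt] h x px by simp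
        have o2: "real n * (\<epsilon>/2) \<le> om p x"
          using Suc.IH[rule_format, of "x - p"] ph' px h by simp
        have "om (x - h) p + om p x \<le> om (x - h) x" using h x ph px by (intro om_super) auto
        then show "real (Suc n) * (\<epsilon>/2) \<le> om (x - h) x" using o1 o2 by (simp add: algebra_simps)
      qed
    qed
    define h0 where "h0 = min x (\<delta>0/2)"
    have h0: "0 < h0" "h0 \<le> x" "h0 < \<delta>0" using xp d0 by (auto simp: h0_def)
    obtain n :: nat where n: "W / (\<epsilon>/2) < real n" using reals_Archimedean2 by blast
    have "real n * (\<epsilon>/2) \<le> om (x - h0) x" using claim h0 by blast
    also have "\<dots> \<le> W" using h0 x by (intro om_le_W) auto
    finally show False using n eps by (simp add: field_simps)
  qed
qed

lemma om_right: "\<exists>h>0. \<forall>b. x \<le> b \<longrightarrow> b < x + h \<longrightarrow> b \<le> 1 \<longrightarrow> om x b < \<epsilon>"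
  if x: "0 \<le> x" "x \<le> 1" and eps: "0 < \<epsilon>"
proof (cases "x = 1")
  case True
  then show ?thesis using om_self[of 1] eps by (intro exI[of _ 1]) auto
next
  case False
  then have xp: "x < 1" using x by simp
  obtain \<delta>0 where d0: "\<delta>0 > 0" "\<forall>p q. 0 \<le> p \<longrightarrow> p \<le> q \<longrightarrow> q \<le> 1 \<longrightarrow> q - p < \<delta>0 \<longrightarrow> tsa p q < \<epsilon>/4"
    using tsa_small[of "\<epsilon>/4"] eps by auto
  show ?thesis
  proof (rule ccontr)
    assume "\<not> ?thesis"
    then have H: "\<And>h. 0 < h \<Longrightarrow> \<exists>b. x \<le> b \<and> b < x + h \<and> b \<le> 1 \<and> \<epsilon> \<le> om x b" by (meson not_less)
    have H2: "\<epsilon> \<le> om x (x + h)" if h: "0 < h" "x + h \<le> 1" for h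
    proof -
      obtain b where b: "x \<le> b" "b < x + h" "b \<le> 1" "\<epsilon> \<le> om x b" using H[OF h(1)] by blast
      have "om x b \<le> om x (x + h)" using b h x by (intro om_mono) auto
      then show ?thesis using b by simp
    qed
    have claim: "\<forall>h. 0 < h \<longrightarrow> x + h \<le> 1 \<longrightarrow> h < \<delta>0 \<longrightarrow> real n * (\<epsilon>/2) \<le> om x (x + h)" for n
    proof (induction n)
      case 0 then show ?case using om_nonneg x by simp
    next
      case (Suc n)
      show ?case
      proof (intro allI impI)
        fix h assume h: "0 < h" "x + h \<le> 1" "h < \<delta>0"
        have "3 * \<epsilon> / 4 < om x (x + h)" using H2[OF h(1,2)] eps by simp
        then have c: "3 * \<epsilon> / 4 < om x (x + h)" .
        have a1: "x \<le> x + h" using h by auto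
        obtain F where F: "part x (x + h) F" "3 * \<epsilon> / 4 < chain tsa F"
          using om_approx[OF x(1) a1 h(2) c] by blast
        have fin: "finite F" using F by (simp add: part_def)
        have ne: "x + h \<in> F - {x}" using F h by (auto simp: part_def)
        define q where "q = Min (F - {x})"
        have "q \<in> F - {x}" unfolding q_def using fin ne by (intro Min_in) auto
        then have qF: "q \<in> F" "q \<noteq> x" by auto
        have qmin: "\<And>y. y \<in> F \<Longrightarrow> y \<noteq> x \<Longrightarrow> q \<le> y" using fin by (auto simp: q_def)
        have rngF: "\<And>y. y \<in> F \<Longrightarrow> x \<le> y \<and> y \<le> x + h" using F by (auto simp: part_def)
        have qx: "x < q" using rngF[OF qF(1)] qF(2) by simp
        have qh: "q \<le> x + h" using rngF[OF qF(1)] by simp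
        have "chain tsa F = chain tsa {y\<in>F. y \<le> q} + chain tsa {y\<in>F. q \<le> y}"
          using fin qF(1) by (rule chain_split)
        also have "{y\<in>F. y \<le> q} = {x, q}"
          using qmin qF qx F rngF by (auto simp: part_def intro: order.antisym)
        also have "chain tsa {x, q} = tsa x q" using qx by (rule chain_pair)
        finally have ce: "chain tsa F = tsa x q + chain tsa {y\<in>F. q \<le> y}" by simp
        have "tsa x q < \<epsilon>/4" using d0(2) qh qx h x by auto
        then have big: "\<epsilon>/2 < chain tsa {y\<in>F. q \<le> y}" using ce F(2) by simp
        have "q \<noteq> x + h"
        proof
          assume "q = x + h"
          then have "{y\<in>F. q \<le> y} = {x + h}" using rngF F by (auto simp: part_def intro: order.antisym)
          then show False using big eps by simp
        qed
        then have qh': "q < x + h" using qh by simp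
        have pt: "part q (x + h) {y\<in>F. q \<le> y}" using F qF qh by (auto simp: part_def)
        have o1: "\<epsilon>/2 < om q (x + h)" using big om_upper[OF _ _ pt] h x qx by simp
        have o2: "real n * (\<epsilon>/2) \<le> om x q"
          using Suc.IH[rule_format, of "q - x"] qh' qx h by simp
        have "om x q + om q (x + h) \<le> om x (x + h)" using h x qh qx by (intro om_super) auto
        then show "real (Suc n) * (\<epsilon>/2) \<le> om x (x + h)" using o1 o2 by (simp add: algebra_simps)
      qed
    qed
    define h0 where "h0 = min (1 - x) (\<delta>0/2)"
    have h0: "0 < h0" "x + h0 \<le> 1" "h0 < \<delta>0" using xp d0 by (auto simp: h0_def)
    obtain n :: nat where n: "W / (\<epsilon>/2) < real n" using reals_Archimedean2 by blast
    have "real n * (\<epsilon>/2) \<le> om x (x + h0)" using claim h0 by blast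
    also have "\<dots> \<le> W" using h0 x by (intro om_le_W) auto
    finally show False using n eps by (simp add: field_simps)
  qed
qed

lemma om_small: "\<exists>\<delta>>0. \<forall>a b. 0 \<le> a \<longrightarrow> a \<le> b \<longrightarrow> b \<le> 1 \<longrightarrow> b - a < \<delta> \<longrightarrow> om a b < \<epsilon>"
  if eps: "0 < \<epsilon>"
proof -
  obtain dt where dt: "dt > 0" "\<forall>p q. 0 \<le> p \<longrightarrow> p \<le> q \<longrightarrow> q \<le> 1 \<longrightarrow> q - p < dt \<longrightarrow> tsa p q < \<epsilon>/3"
    using tsa_small[of "\<epsilon>/3"] eps by auto
  have ex: "\<forall>x\<in>{0..1}. \<exists>r>0. r \<le> dt/2 \<and> (\<forall>a. 0 \<le> a \<longrightarrow> x - r < a \<longrightarrow> a \<le> x \<longrightarrow> om a x < \<epsilon>/3)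
      \<and> (\<forall>b. x \<le> b \<longrightarrow> b < x + r \<longrightarrow> b \<le> 1 \<longrightarrow> om x b < \<epsilon>/3)"
  proof
    fix x :: real assume x: "x \<in> {0..1}"
    obtain h1 where h1: "h1 > 0" "\<forall>a. 0 \<le> a \<longrightarrow> x - h1 < a \<longrightarrow> a \<le> x \<longrightarrow> om a x < \<epsilon>/3"
      using om_left[of x "\<epsilon>/3"] x eps by auto
    obtain h2 where h2: "h2 > 0" "\<forall>b. x \<le> b \<longrightarrow> b < x + h2 \<longrightarrow> b \<le> 1 \<longrightarrow> om x b < \<epsilon>/3"
      using om_right[of x "\<epsilon>/3"] x eps by auto
    show "\<exists>r>0. r \<le> dt/2 \<and> (\<forall>a. 0 \<le> a \<longrightarrow> x - r < a \<longrightarrow> a \<le> x \<longrightarrow> om a x < \<epsilon>/3)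
      \<and> (\<forall>b. x \<le> b \<longrightarrow> b < x + r \<longrightarrow> b \<le> 1 \<longrightarrow> om x b < \<epsilon>/3)"
    proof (intro exI[of _ "min (min h1 h2) (dt/2)"] conjI allI impI)
      show "0 < min (min h1 h2) (dt/2)" using h1(1) h2(1) dt(1) by simp
      show "min (min h1 h2) (dt/2) \<le> dt/2" by simp
      fix a assume "0 \<le> a" "x - min (min h1 h2) (dt/2) < a" "a \<le> x"
      then show "om a x < \<epsilon>/3" using h1(2) by simp
    next
      fix b assume "x \<le> b" "b < x + min (min h1 h2) (dt/2)" "b \<le> 1"
      then show "om x b < \<epsilon>/3" using h2(2) by simp
    qed
  qed
  then obtain r where r: "\<And>x. x \<in> {0..1} \<Longrightarrow> r x > 0 \<and> r x \<le> dt/2 \<and> (\<forall>a. 0 \<le> a \<longrightarrow> x - r x < a \<longrightarrow> a \<le> x \<longrightarrow> om a x < \<epsilon>/3)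
      \<and> (\<forall>b. x \<le> b \<longrightarrow> b < x + r x \<longrightarrow> b \<le> 1 \<longrightarrow> om x b < \<epsilon>/3)"
  proof -
    obtain r where "\<forall>x\<in>{0..1}. r x > 0 \<and> r x \<le> dt/2 \<and> (\<forall>a. 0 \<le> a \<longrightarrow> x - r x < a \<longrightarrow> a \<le> x \<longrightarrow> om a x < \<epsilon>/3)
      \<and> (\<forall>b. x \<le> b \<longrightarrow> b < x + r x \<longrightarrow> b \<le> 1 \<longrightarrow> om x b < \<epsilon>/3)"
      using bchoice[OF ex] by blast
    then show ?thesis using that by blast
  qed
  have cov: "{0..1::real} \<subseteq> \<Union> ((\<lambda>x. ball x (r x)) ` {0..1})"
  proof
    fix y :: real assume y: "y \<in> {0..1}"
    then have "y \<in> ball y (r y)" using r[OF y] by simp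
    then show "y \<in> \<Union> ((\<lambda>x. ball x (r x)) ` {0..1})" using y by blast
  qed
  obtain e where e: "0 < e" "\<And>s. s \<in> {0..1::real} \<Longrightarrow> \<exists>G \<in> (\<lambda>x. ball x (r x)) ` {0..1}. ball s e \<subseteq> G"
    using Heine_Borel_lemma[OF compact_Icc cov] by blast
  show ?thesis
  proof (intro exI[of _ e] conjI allI impI e(1))
    fix a b :: real assume ab: "0 \<le> a" "a \<le> b" "b \<le> 1" "b - a < e"
    obtain x where x: "x \<in> {0..1}" "ball a e \<subseteq> ball x (r x)" using e(2)[of a] ab by auto
    have "a \<in> ball a e" "b \<in> ball a e" using ab e(1) by (auto simp: dist_real_def)
    then have "a \<in> ball x (r x)" "b \<in> ball x (r x)" using x(2) by blast+
    then have ax: "\<bar>a - x\<bar> < r x" "\<bar>b - x\<bar> < r x" by (auto simp: dist_real_def abs_minus_commute)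
    note rx = r[OF x(1)]
    consider "a \<le> x" "x \<le> b" | "b < x" | "x < a" by linarith
    then show "om a b < \<epsilon>"
    proof cases
      case 1
      have T: "tsa p q \<le> \<epsilon>/3" if pq: "a \<le> p" "p \<le> q" "q \<le> b" for p q
      proof -
        have "q - p < dt" using pq ax rx by linarith
        then have "tsa p q < \<epsilon>/3" using dt(2) pq ab by auto
        then show ?thesis by simp
      qed
      have "om a b \<le> om a x + om x b + \<epsilon>/3" using 1 ab by (intro om_near_sub T) auto
      moreover have "om a x < \<epsilon>/3" using conjunct1[OF conjunct2[OF conjunct2[OF rx]]] ax 1 ab by simp
      moreover have "om x b < \<epsilon>/3" using conjunct2[OF conjunct2[OF conjunct2[OF rx]]] ax 1 ab by simp
      ultimately show ?thesis by simp
    next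
      case 2
      have "om a b \<le> om a x" using 2 ab x by (intro om_mono) auto
      moreover have "om a x < \<epsilon>/3" using conjunct1[OF conjunct2[OF conjunct2[OF rx]]] ax 2 ab by simp
      ultimately show ?thesis using eps by linarith
    next
      case 3
      have "om a b \<le> om x b" using 3 ab x by (intro om_mono) auto
      moreover have "om x b < \<epsilon>/3" using conjunct2[OF conjunct2[OF conjunct2[OF rx]]] ax 3 ab by simp
      ultimately show ?thesis using eps by linarith
    qed
  qed
qed

end


lemma chain_cong:
  assumes "\<And>x. x \<in> F \<Longrightarrow> x \<noteq> Max F \<Longrightarrow> f x (nxt F x) = f' x (nxt F x)"
  shows "chain f F = chain f' F"
  unfolding chain_def using assms by (intro sum.cong) auto

lemma chain_zero: "chain (\<lambda>a b. 0) F = 0"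
  by (simp add: chain_def)

lemma nxt_props:
  assumes "finite F" "x \<in> F" "x < Max F"
  shows "nxt F x \<in> F" "x < nxt F x" "\<And>y. y \<in> F \<Longrightarrow> x < y \<Longrightarrow> nxt F x \<le> y"
proof -
  have "Max F \<in> F" using assms by (intro Max_in) auto
  then have ne: "{y\<in>F. x < y} \<noteq> {}" using assms by auto
  have fin: "finite {y\<in>F. x < y}" using assms by simp
  show "nxt F x \<in> F" "x < nxt F x" using Min_in[OF fin ne] by (auto simp: nxt_def)
  show "\<And>y. y \<in> F \<Longrightarrow> x < y \<Longrightarrow> nxt F x \<le> y" using fin by (auto simp: nxt_def)
qed

lemma nxt_le_max:
  assumes "finite F" "x \<in> F" "x \<noteq> Max F"
  shows "nxt F x \<le> Max F" "x < nxt F x" "nxt F x \<in> F"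
proof -
  have "x < Max F" using Max_ge[OF assms(1,2)] assms(3) by linarith
  then show "nxt F x \<le> Max F" "x < nxt F x" "nxt F x \<in> F" using nxt_props[OF assms(1,2)] assms(1) by auto
qed

context ctx begin

definition phi where "phi t a b = (if b \<le> t then g a b else if a < t then
   A (\<gamma> a, ((t - a) / (b - a)) *\<^sub>R tdiff (\<gamma> b) (\<gamma> a)) else 0)"

lemma interp_chain:
  assumes "sorted_wrt (<) D" "D \<noteq> []"
  shows "interp_sum A \<gamma> D t = chain (phi t) (set D)"
proof -
  have "interp_sum A \<gamma> D t = sum_list (map (\<lambda>(a,b). phi t a b) (intervals D))"
    unfolding interp_sum_def phi_def g_def by (rule arg_cong[where f=sum_list]) (auto intro!: map_cong)
  then show ?thesis using list_chain[OF assms, of "phi t"] by simp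
qed

lemma chain_phi_low:
  assumes "finite F" "c \<le> t"
  shows "chain (phi t) {x\<in>F. x \<le> c} = chain g {x\<in>F. x \<le> c}"
proof (rule chain_cong)
  fix x assume x: "x \<in> {x\<in>F. x \<le> c}" "x \<noteq> Max {x\<in>F. x \<le> c}"
  have fin: "finite {x\<in>F. x \<le> c}" using assms by simp
  have "nxt {x\<in>F. x \<le> c} x \<in> {x\<in>F. x \<le> c}" using nxt_le_max[OF fin x] by simp
  then show "phi t x (nxt {x\<in>F. x \<le> c} x) = g x (nxt {x\<in>F. x \<le> c} x)"
    using assms by (simp add: phi_def)
qed

lemma chain_phi_high:
  assumes "finite F" "t \<le> c"
  shows "chain (phi t) {x\<in>F. c \<le> x} = 0"
proof -
  have "chain (phi t) {x\<in>F. c \<le> x} = chain (\<lambda>a b. 0) {x\<in>F. c \<le> x}"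
  proof (rule chain_cong)
    fix x assume x: "x \<in> {x\<in>F. c \<le> x}" "x \<noteq> Max {x\<in>F. c \<le> x}"
    have fin: "finite {x\<in>F. c \<le> x}" using assms by simp
    have "x < nxt {x\<in>F. c \<le> x} x" using nxt_le_max[OF fin x] by simp
    then show "phi t x (nxt {x\<in>F. c \<le> x} x) = 0" using x assms by (simp add: phi_def)
  qed
  then show ?thesis by (simp add: chain_zero)
qed

lemma interp_decomp:
  assumes F: "finite F" "0 \<in> F" "1 \<in> F" "F \<subseteq> {0..1}" and t: "0 \<le> t" "t \<le> 1"
  shows "(chain (phi t) F = chain g (insert t {x\<in>F. x \<le> t})) \<or>
    (\<exists>p q. p \<in> F \<and> q \<in> F \<and> p < t \<and> t < q \<and> (\<forall>y\<in>F. y \<le> p \<or> q \<le> y) \<and>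
       chain (phi t) F - chain g (insert t {x\<in>F. x \<le> t}) = phi t p q - g p t)"
proof (cases "t \<in> F")
  case True
  have "chain (phi t) F = chain (phi t) {x\<in>F. x \<le> t} + chain (phi t) {x\<in>F. t \<le> x}"
    using F(1) True by (rule chain_split)
  also have "\<dots> = chain g {x\<in>F. x \<le> t}" using chain_phi_low[OF F(1), of t t] chain_phi_high[OF F(1), of t t] by simp
  finally show ?thesis using True by (simp add: insert_absorb)
next
  case False
  define L where "L = {x\<in>F. x < t}"
  have finL: "finite L" using F by (simp add: L_def)
  have t0: "0 < t" using False F t by (cases "t = 0") auto
  have t1: "t < 1" using False F t by (cases "t = 1") auto
  have "0 \<in> L" using t0 F by (simp add: L_def)
  define p where "p = Max L"
  have pL: "p \<in> L" unfolding p_def using finL \<open>0 \<in> L\<close> by (intro Max_in) auto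
  have pmax: "\<And>y. y \<in> F \<Longrightarrow> y < t \<Longrightarrow> y \<le> p" using finL by (auto simp: p_def L_def)
  have pF: "p \<in> F" "p < t" using pL by (auto simp: L_def)
  have MF: "Max F = 1" using F by (intro Max_eqI) auto
  have pM: "p < Max F" using pF t1 MF by simp
  define q where "q = nxt F p"
  have qF: "q \<in> F" "p < q" "\<And>y. y \<in> F \<Longrightarrow> p < y \<Longrightarrow> q \<le> y"
    using nxt_props[OF F(1) pF(1) pM] by (auto simp: q_def)
  have tq: "t < q"
  proof (rule ccontr)
    assume "\<not> t < q"
    then have "q < t" using False qF(1) by (cases "q = t") auto
    then show False using pmax[OF qF(1)] qF(2) by simp
  qed
  have gap: "\<forall>y\<in>F. y \<le> p \<or> q \<le> y"
  proof
    fix y assume y: "y \<in> F"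
    show "y \<le> p \<or> q \<le> y" using qF(3)[OF y] by (cases "p < y") auto
  qed
  have "chain (phi t) F = chain (phi t) {x\<in>F. x \<le> p} + chain (phi t) {x\<in>F. p \<le> x}"
    using F(1) pF(1) by (rule chain_split)
  also have "chain (phi t) {x\<in>F. p \<le> x} = chain (phi t) {y\<in>{x\<in>F. p \<le> x}. y \<le> q} + chain (phi t) {y\<in>{x\<in>F. p \<le> x}. q \<le> y}"
    using F(1) qF pF by (intro chain_split) auto
  also have "{y\<in>{x\<in>F. p \<le> x}. y \<le> q} = {p, q}" using gap pF qF by (auto intro: order.antisym)
  also have "chain (phi t) {p, q} = phi t p q" using qF(2) by (rule chain_pair)
  also have "{y\<in>{x\<in>F. p \<le> x}. q \<le> y} = {x\<in>F. q \<le> x}" using pF qF by auto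
  also have "chain (phi t) {x\<in>F. q \<le> x} = 0" using chain_phi_high[OF F(1), of t q] tq by simp
  also have "chain (phi t) {x\<in>F. x \<le> p} = chain g {x\<in>F. x \<le> p}" using chain_phi_low[OF F(1), of p t] pF by simp
  finally have e1: "chain (phi t) F = chain g {x\<in>F. x \<le> p} + phi t p q" by simp
  have e2: "insert t {x\<in>F. x \<le> t} = insert t {x\<in>F. x \<le> p}"
    using pmax False pF by (auto simp: order.order_iff_strict)
  have "chain g (insert t {x\<in>F. x \<le> p}) = chain g {y\<in>insert t {x\<in>F. x \<le> p}. y \<le> p} + chain g {y\<in>insert t {x\<in>F. x \<le> p}. p \<le> y}"
    using F(1) pF by (intro chain_split) auto
  also have "{y\<in>insert t {x\<in>F. x \<le> p}. y \<le> p} = {x\<in>F. x \<le> p}" using pF by auto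
  also have "{y\<in>insert t {x\<in>F. x \<le> p}. p \<le> y} = {p, t}" using pF by auto
  also have "chain g {p, t} = g p t" using pF(2) by (rule chain_pair)
  finally have e3: "chain g (insert t {x\<in>F. x \<le> t}) = chain g {x\<in>F. x \<le> p} + g p t" using e2 by simp
  show ?thesis using e1 e3 pF qF tq gap by (intro disjI2 exI[of _ p] exI[of _ q]) auto
qed

lemma phi_bound:
  assumes "0 \<le> p" "p < t" "t < q" "q \<le> 1"
  shows "norm (phi t p q) \<le> G * tdist (\<gamma> p) (\<gamma> q) powr \<eta>"
proof -
  define l where "l = (t - p) / (q - p)"
  have l: "0 \<le> l" "l \<le> 1" using assms by (auto simp: l_def divide_simps)
  have pq: "p \<in> {0..1}" "q \<in> {0..1}" using assms by auto
  have nv: "norm (l *\<^sub>R tdiff (\<gamma> q) (\<gamma> p)) \<le> tdist (\<gamma> p) (\<gamma> q)"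
    using l by (simp add: norm_tdiff mult_left_le_one_le tdist_nonneg)
  have "phi t p q = A (\<gamma> p, l *\<^sub>R tdiff (\<gamma> q) (\<gamma> p))" using assms by (simp add: phi_def l_def)
  also have "norm \<dots> \<le> G * norm (l *\<^sub>R tdiff (\<gamma> q) (\<gamma> p)) powr \<eta>"
    using gam_close[OF pq] nv by (intro gr_bound[OF Gd Om gam_torus[OF pq(1)]] eta(1)) auto
  also have "\<dots> \<le> G * tdist (\<gamma> p) (\<gamma> q) powr \<eta>"
    using nv eta G0 by (intro mult_left_mono powr_mono2) auto
  finally show ?thesis .
qed

end


definition consec :: "real set \<Rightarrow> real \<Rightarrow> real \<Rightarrow> bool" where
  "consec F a b \<longleftrightarrow> a \<in> F \<and> b \<in> F \<and> a < b \<and> (\<forall>y\<in>F. y \<le> a \<or> b \<le> y)"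

lemma consec_nxt:
  assumes "finite F" "x \<in> F" "x \<noteq> Max F"
  shows "consec F x (nxt F x)"
proof -
  have "x < Max F" using Max_ge[OF assms(1,2)] assms(3) by linarith
  note n = nxt_props[OF assms(1,2) this]
  show ?thesis unfolding consec_def
  proof (intro conjI ballI)
    fix y assume "y \<in> F" then show "y \<le> x \<or> nxt F x \<le> y" using n(3)[of y] by (cases "x < y") auto
  qed (use assms n in auto)
qed

lemma chain_mono_consec:
  fixes f f' :: "real \<Rightarrow> real \<Rightarrow> real"
  assumes "finite F" "\<And>a b. consec F a b \<Longrightarrow> f a b \<le> f' a b"
  shows "chain f F \<le> chain f' F"
  unfolding chain_def using assms consec_nxt by (intro sum_mono) auto

lemma chain_norm: "norm (chain f F) \<le> chain (\<lambda>a b. norm (f a b)) F"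
  unfolding chain_def by (rule norm_sum)

lemma chain_scale: "chain (\<lambda>a b. c * f a b) F = c * (chain f F :: real)"
  unfolding chain_def by (simp add: sum_distrib_left)

lemma part_induct[consumes 1, case_names base step]:
  assumes "part s t F"
    and base: "\<And>s. P s s {s}"
    and step: "\<And>s m t F. part s t F \<Longrightarrow> s \<le> m \<Longrightarrow> m < t \<Longrightarrow> m \<in> F \<Longrightarrow> (\<forall>y\<in>F. y \<le> m \<or> y = t)
       \<Longrightarrow> P s m {x\<in>F. x \<le> m} \<Longrightarrow> P s t F"
  shows "P s t F"
proof -
  have "\<And>t F. card F = n \<Longrightarrow> part s t F \<Longrightarrow> P s t F" for n
  proof (induction n rule: less_induct)
    case (less n t F)
    have fin: "finite F" "s \<in> F" "t \<in> F" "F \<subseteq> {s..t}" using less.prems by (auto simp: part_def)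
    show ?case
    proof (cases "s = t")
      case True
      then have "F = {s}" using fin by auto
      then show ?thesis using base True by simp
    next
      case False
      then have st: "s < t" using fin by auto
      have ne: "s \<in> F - {t}" using fin st by auto
      define m where "m = Max (F - {t})"
      have mF: "m \<in> F - {t}" unfolding m_def using fin ne by (intro Max_in) auto
      have mmax: "\<And>y. y \<in> F \<Longrightarrow> y \<noteq> t \<Longrightarrow> y \<le> m" using fin by (auto simp: m_def)
      have mt: "m < t" using mF fin by auto
      have sm: "s \<le> m" using mmax[of s] fin st by auto
      have pm: "part s m {x\<in>F. x \<le> m}" using fin mF sm by (auto simp: part_def)
      have ps: "{x\<in>F. x \<le> m} \<subset> F"
      proof
        show "{x\<in>F. x \<le> m} \<subseteq> F" by auto
        show "{x\<in>F. x \<le> m} \<noteq> F"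
        proof
          assume "{x\<in>F. x \<le> m} = F"
          then have "t \<in> {x\<in>F. x \<le> m}" using fin(3) by simp
          then show False using mt by simp
        qed
      qed
      have "card {x\<in>F. x \<le> m} < card F" using fin(1) ps by (rule psubset_card_mono)
      then have "P s m {x\<in>F. x \<le> m}" using less.IH less.prems(1) pm by blast
      moreover have "\<forall>y\<in>F. y \<le> m \<or> y = t" using mmax by blast
      ultimately show ?thesis using step[OF less.prems(2) sm mt] mF by blast
    qed
  qed
  then show ?thesis using assms(1) by blast
qed

lemma chain_last:
  assumes "part s t F" "m \<in> F" "m < t" "\<forall>y\<in>F. y \<le> m \<or> y = t"
  shows "chain f F = chain f {x\<in>F. x \<le> m} + f m t"
proof -
  have fin: "finite F" using assms by (simp add: part_def)
  have "chain f F = chain f {x\<in>F. x \<le> m} + chain f {x\<in>F. m \<le> x}" using fin assms(2) by (rule chain_split)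
  also have "{x\<in>F. m \<le> x} = {m, t}" using assms by (auto simp: part_def)
  also have "chain f {m, t} = f m t" using assms(3) by (rule chain_pair)
  finally show ?thesis .
qed

lemma chain_refine:
  fixes f :: "real \<Rightarrow> real \<Rightarrow> 'a::ab_group_add"
  assumes "part s t F"
  shows "\<And>R. part s t R \<Longrightarrow> F \<subseteq> R \<Longrightarrow> chain f R - chain f F = chain (\<lambda>a b. chain f {x\<in>R. a \<le> x \<and> x \<le> b} - f a b) F"
  using assms
proof (induction rule: part_induct)
  case (base s)
  then have "R = {s}" by (auto simp: part_def)
  then show ?case by simp
next
  case (step s m t F)
  define R1 where "R1 = {x\<in>R. x \<le> m}"
  have finR: "finite R" using step by (simp add: part_def)
  have mR: "m \<in> R" using step by auto
  have p1: "part s m R1" using step mR by (auto simp: part_def R1_def)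
  have sub: "{x\<in>F. x \<le> m} \<subseteq> R1" using step by (auto simp: R1_def)
  have IH: "chain f R1 - chain f {x\<in>F. x \<le> m} = chain (\<lambda>a b. chain f {x\<in>R1. a \<le> x \<and> x \<le> b} - f a b) {x\<in>F. x \<le> m}"
    using step.IH[OF p1 sub] .
  have cR: "chain f R = chain f R1 + chain f {x\<in>R. m \<le> x \<and> x \<le> t}"
  proof -
    have "chain f R = chain f {x\<in>R. x \<le> m} + chain f {x\<in>R. m \<le> x}" using finR mR by (rule chain_split)
    moreover have "{x\<in>R. m \<le> x} = {x\<in>R. m \<le> x \<and> x \<le> t}" using step(7) by (auto simp: part_def)
    ultimately show ?thesis by (simp add: R1_def)
  qed
  have cF: "chain f F = chain f {x\<in>F. x \<le> m} + f m t" using chain_last[OF step(1,4,3,5)] .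
  have cH: "chain (\<lambda>a b. chain f {x\<in>R. a \<le> x \<and> x \<le> b} - f a b) F
      = chain (\<lambda>a b. chain f {x\<in>R. a \<le> x \<and> x \<le> b} - f a b) {x\<in>F. x \<le> m} + (chain f {x\<in>R. m \<le> x \<and> x \<le> t} - f m t)"
    using chain_last[OF step(1,4,3,5)] .
  have cH2: "chain (\<lambda>a b. chain f {x\<in>R. a \<le> x \<and> x \<le> b} - f a b) {x\<in>F. x \<le> m}
      = chain (\<lambda>a b. chain f {x\<in>R1. a \<le> x \<and> x \<le> b} - f a b) {x\<in>F. x \<le> m}"
  proof (rule chain_cong)
    fix x assume x: "x \<in> {x\<in>F. x \<le> m}" "x \<noteq> Max {x\<in>F. x \<le> m}"
    have fin: "finite {x\<in>F. x \<le> m}" using step by (simp add: part_def)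
    have "nxt {x\<in>F. x \<le> m} x \<le> m" using nxt_le_max[OF fin x] by auto
    then have "{y\<in>R. x \<le> y \<and> y \<le> nxt {x\<in>F. x \<le> m} x} = {y\<in>R1. x \<le> y \<and> y \<le> nxt {x\<in>F. x \<le> m} x}"
      by (auto simp: R1_def)
    then show "chain f {y\<in>R. x \<le> y \<and> y \<le> nxt {x\<in>F. x \<le> m} x} - f x (nxt {x\<in>F. x \<le> m} x) =
        chain f {y\<in>R1. x \<le> y \<and> y \<le> nxt {x\<in>F. x \<le> m} x} - f x (nxt {x\<in>F. x \<le> m} x)" by simp
  qed
  show ?case using IH cR cF cH cH2 by (simp add: algebra_simps)
qed

context ctx begin

lemma K0: "0 \<le> K"
proof -
  have "0 \<le> zeta_real \<theta>" unfolding zeta_real_def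
    using zeta_summable[OF theta_gt1] by (intro suminf_nonneg) auto
  then show ?thesis unfolding K_def using S0 by simp
qed

lemma chain_om_le:
  assumes "part s t F" "0 \<le> s" "t \<le> 1"
  shows "chain om F \<le> om s t"
  using assms
proof (induction rule: part_induct)
  case (base s) then show ?case using om_self by simp
next
  case (step s m t F)
  have "chain om F = chain om {x\<in>F. x \<le> m} + om m t" using chain_last[OF step(1,4,3,5)] .
  also have "\<dots> \<le> om s m + om m t" using step by simp
  also have "\<dots> \<le> om s t" using step by (intro om_super) auto
  finally show ?case .
qed

lemma om_pow_le:
  assumes "0 \<le> w" "w \<le> e"
  shows "w powr \<theta> \<le> e powr (\<theta> - 1) * w"
proof (cases "w = 0")
  case True then show ?thesis by simp
next
  case False
  have "w powr \<theta> = w powr ((\<theta> - 1) + 1)" by simp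
  also have "\<dots> = w powr (\<theta> - 1) * w powr 1" by (rule powr_add)
  finally have "w powr \<theta> = w powr (\<theta> - 1) * w powr 1" .
  also have "\<dots> \<le> e powr (\<theta> - 1) * w"
    using assms theta_gt1 False by (auto intro!: mult_right_mono powr_mono2)
  finally show ?thesis .
qed

lemma refine_bound:
  assumes F: "part 0 t F" and R: "part 0 t R" "F \<subseteq> R" and t: "t \<le> 1"
    and small: "\<And>a b. consec F a b \<Longrightarrow> om a b \<le> e" and e: "0 \<le> e"
  shows "norm (chain g R - chain g F) \<le> K * e powr (\<theta> - 1) * W"
proof -
  have finF: "finite F" using F by (simp add: part_def)
  have rngF: "\<And>x. x \<in> F \<Longrightarrow> 0 \<le> x \<and> x \<le> t" using F by (auto simp: part_def)
  have "norm (chain g R - chain g F) = norm (chain (\<lambda>a b. chain g {x\<in>R. a \<le> x \<and> x \<le> b} - g a b) F)"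
    using chain_refine[OF F R, where f=g] by simp
  also have "\<dots> \<le> chain (\<lambda>a b. norm (chain g {x\<in>R. a \<le> x \<and> x \<le> b} - g a b)) F" by (rule chain_norm)
  also have "\<dots> \<le> chain (\<lambda>a b. (K * e powr (\<theta> - 1)) * om a b) F"
  proof (rule chain_mono_consec[OF finF])
    fix a b assume ab: "consec F a b"
    have ab': "a \<in> F" "b \<in> F" "a < b" using ab by (auto simp: consec_def)
    have pr: "part a b {x\<in>R. a \<le> x \<and> x \<le> b}" using ab' R finF by (auto simp: part_def)
    have "norm (chain g {x\<in>R. a \<le> x \<and> x \<le> b} - g a b) \<le> K * om a b powr \<theta>"
      using rngF[of a] rngF[of b] ab' t by (intro sew_chain[OF pr]) auto
    also have "om a b powr \<theta> \<le> e powr (\<theta> - 1) * om a b"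
      using small[OF ab] rngF[of a] rngF[of b] ab' t by (intro om_pow_le om_nonneg) auto
    finally show "norm (chain g {x\<in>R. a \<le> x \<and> x \<le> b} - g a b) \<le> (K * e powr (\<theta> - 1)) * om a b"
      using K0 by (simp add: mult_left_mono mult.assoc)
  qed
  also have "\<dots> = (K * e powr (\<theta> - 1)) * chain om F" by (rule chain_scale)
  also have "\<dots> \<le> (K * e powr (\<theta> - 1)) * W"
  proof -
    have "chain om F \<le> om 0 t" using chain_om_le[OF F] t by simp
    also have "\<dots> \<le> W" using t F by (intro om_le_W) (auto simp: part_def)
    finally show ?thesis using K0 by (intro mult_left_mono) auto
  qed
  finally show ?thesis .
qed

end


lemma nxt_sorted:
  assumes "sorted_wrt (<) xs" "Suc i < length xs"
  shows "nxt (set xs) (xs ! i) = xs ! Suc i"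
  unfolding nxt_def
proof (rule Min_eqI)
  show "finite {y \<in> set xs. xs ! i < y}" by simp
  show "xs ! Suc i \<in> {y \<in> set xs. xs ! i < y}"
    using assms by (auto simp: sorted_wrt_iff_nth_less)
  fix y assume "y \<in> {y \<in> set xs. xs ! i < y}"
  then obtain j where j: "j < length xs" "y = xs ! j" "xs ! i < xs ! j" by (auto simp: in_set_conv_nth)
  have "i < j"
  proof (rule ccontr)
    assume "\<not> i < j"
    then have "j \<le> i" by simp
    then have "xs ! j \<le> xs ! i" using assms j by (cases "j = i") (auto simp: sorted_wrt_iff_nth_less less_imp_le)
    then show False using j by simp
  qed
  then show "xs ! Suc i \<le> y" using assms j
    by (cases "Suc i = j") (auto simp: sorted_wrt_iff_nth_less less_imp_le)
qed

lemma partition_props: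
  assumes "partition01 D"
  shows "finite (set D)" "0 \<in> set D" "1 \<in> set D" "set D \<subseteq> {0..1}" "sorted_wrt (<) D" "D \<noteq> []"
    "Max (set D) = 1"
proof -
  have D: "2 \<le> length D" "hd D = 0" "last D = 1" "sorted_wrt (<) D" using assms by (auto simp: partition01_def)
  then have ne: "D \<noteq> []" by auto
  show "finite (set D)" "sorted_wrt (<) D" "D \<noteq> []" using D ne by auto
  show "0 \<in> set D" "1 \<in> set D" using D ne by (metis hd_in_set, metis last_in_set)
  show "set D \<subseteq> {0..1}" using sorted_hd_last[OF D(4)] D by auto
  then show "Max (set D) = 1" using \<open>1 \<in> set D\<close> by (intro Max_eqI) auto
qed

lemma consec_nxt_eq:
  assumes "finite F" "consec F a b"
  shows "nxt F a = b"
  unfolding nxt_def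
proof (rule Min_eqI)
  show "finite {y \<in> F. a < y}" using assms(1) by simp
  show "b \<in> {y \<in> F. a < y}" using assms(2) by (auto simp: consec_def)
  fix y assume y: "y \<in> {y \<in> F. a < y}"
  then have "y \<le> a \<or> b \<le> y" using assms(2) unfolding consec_def by blast
  then show "b \<le> y" using y by auto
qed

lemma mesh_gap:
  assumes D: "partition01 D" "mesh D < \<delta>" and x: "x \<in> set D" "x \<noteq> 1"
  shows "nxt (set D) x - x < \<delta>"
proof -
  note P = partition_props[OF D(1)]
  obtain i where i: "i < length D" "x = D ! i" using x by (auto simp: in_set_conv_nth)
  have "Suc i < length D"
  proof (rule ccontr)
    assume "\<not> Suc i < length D"
    then have "i = length D - 1" using i by simp
    then have "x = last D" using i P(6) by (simp add: last_conv_nth)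
    then show False using x D(1) by (simp add: partition01_def)
  qed
  then have n: "nxt (set D) x = D ! Suc i" using nxt_sorted[OF P(5)] i by simp
  have "(D ! i, D ! Suc i) \<in> set (intervals D)"
    using \<open>Suc i < length D\<close> unfolding intervals_def
    by (auto simp: in_set_conv_nth nth_tl intro!: exI[of _ i])
  then have "D ! Suc i - D ! i \<in> set (map (\<lambda>(a,b). b - a) (intervals D))" by force
  then have "D ! Suc i - D ! i \<le> mesh D" unfolding mesh_def by (intro Max_ge) auto
  then show ?thesis using n i D(2) by simp
qed

lemma partition_exists:
  assumes d: "0 < \<delta>" and E: "finite E" "E \<subseteq> {0..1}"
  shows "\<exists>D. partition01 D \<and> mesh D < \<delta> \<and> E \<subseteq> set D"
proof -
  obtain N :: nat where N: "1 / \<delta> < real N" using reals_Archimedean2 by blast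
  have Npos: "0 < real N" using N d by (smt (verit) divide_pos_pos)
  have Nd: "1 / real N < \<delta>" using N d Npos by (simp add: field_simps)
  define F where "F = E \<union> (\<lambda>k. real k / real N) ` {0..N}"
  have fin: "finite F" using E by (simp add: F_def)
  obtain xs where xs: "sorted_wrt (<) xs" "set xs = F" using finite_set_strict_sorted[OF fin] by blast
  have d: "distinct xs" using xs(1) strict_sorted_iff by blast
  have in01: "0 \<in> F" "1 \<in> F"
  proof -
    have "real 0 / real N \<in> (\<lambda>k. real k / real N) ` {0..N}" by (intro imageI) auto
    then show "0 \<in> F" by (simp add: F_def)
    have "real N / real N \<in> (\<lambda>k. real k / real N) ` {0..N}" by (intro imageI) auto
    then show "1 \<in> F" using Npos by (simp add: F_def)
  qed
  have Fsub: "F \<subseteq> {0..1}" using E Npos by (auto simp: F_def divide_le_eq_1)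
  have "card {0, 1::real} \<le> card F" using fin in01 by (intro card_mono) auto
  then have len: "2 \<le> length xs" using distinct_card[OF d] xs(2) by simp
  have ne: "xs \<noteq> []" using len by auto
  have h1: "hd xs \<le> 0" using sorted_hd_last[OF xs(1), of 0] in01 xs(2) by simp
  have h2: "0 \<le> hd xs" using hd_in_set[OF ne] xs(2) Fsub by auto
  have l1: "1 \<le> last xs" using sorted_hd_last[OF xs(1), of 1] in01 xs(2) by simp
  have l2: "last xs \<le> 1" using last_in_set[OF ne] xs(2) Fsub by auto
  have h: "hd xs = 0" using h1 h2 by simp
  have l: "last xs = 1" using l1 l2 by simp
  have P: "partition01 xs" using len h l xs(1) by (simp add: partition01_def)
  have gaps: "b - a < \<delta>" if ab: "(a, b) \<in> set (intervals xs)" for a b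
  proof -
    obtain i where i0: "i < length (zip xs (tl xs))" "(a, b) = zip xs (tl xs) ! i"
      using ab unfolding intervals_def by (auto simp: in_set_conv_nth)
    then have i: "Suc i < length xs" "a = xs ! i" "b = xs ! Suc i" by (auto simp: nth_tl)
    have ai: "a < b" using i xs(1) by (auto simp: sorted_wrt_iff_nth_less)
    have bF: "b \<in> F" using i xs(2) by auto
    then have "b \<le> 1" using Fsub by auto
    then have aF: "a \<in> F" "a < 1" using i xs(2) ai by auto
    define k where "k = nat \<lfloor>a * real N\<rfloor> + 1"
    have a0: "0 \<le> a" using aF Fsub by auto
    have fl: "\<lfloor>a * real N\<rfloor> \<ge> 0" using a0 Npos by simp
    have kN: "k \<le> N"
    proof -
      have "a * real N < real N" using aF Npos by simp
      then have "\<lfloor>a * real N\<rfloor> < int N" by (simp add: floor_less_iff)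
      then have "nat \<lfloor>a * real N\<rfloor> < N" using fl by linarith
      then show ?thesis by (simp add: k_def)
    qed
    have gk: "real k / real N \<in> F" using kN by (auto simp: F_def)
    have ak: "a < real k / real N"
    proof -
      have "a * real N < real_of_int \<lfloor>a * real N\<rfloor> + 1" using floor_correct[of "a * real N"] by simp
      moreover have "real k = real_of_int \<lfloor>a * real N\<rfloor> + 1" using fl by (simp add: k_def)
      ultimately have "a * real N < real k" by linarith
      then show ?thesis using Npos by (simp add: field_simps)
    qed
    have kb: "real k / real N - a \<le> 1 / real N"
    proof -
      have "real_of_int \<lfloor>a * real N\<rfloor> \<le> a * real N" using floor_correct[of "a * real N"] by simp
      moreover have "real k = real_of_int \<lfloor>a * real N\<rfloor> + 1" using fl by (simp add: k_def)
      ultimately have "real k - a * real N \<le> 1" by linarith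
      moreover have "real k / real N - a = (real k - a * real N) / real N" using Npos by (simp add: field_simps)
      ultimately show ?thesis using Npos by (simp add: divide_right_mono)
    qed
    have "b = nxt (set xs) a" using nxt_sorted[OF xs(1) i(1)] i by simp
    also have "\<dots> \<le> real k / real N"
      using nxt_props(3)[of "set xs" a "real k / real N"] xs(2) aF gk ak fin Fsub
      by (metis (no_types, lifting) Max_ge atLeastAtMost_iff basic_trans_rules(21) in01(2) linorder_not_le subsetD)
    finally show ?thesis using kb Nd by simp
  qed
  have "mesh xs < \<delta>"
    unfolding mesh_def
  proof (subst Max_less_iff)
    show "finite (set (map (\<lambda>(a, b). b - a) (intervals xs)))" by simp
    show "set (map (\<lambda>(a, b). b - a) (intervals xs)) \<noteq> {}"
      using len by (cases xs; cases "tl xs") (auto simp: intervals_def)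
    show "\<forall>a\<in>set (map (\<lambda>(a, b). b - a) (intervals xs)). a < \<delta>" using gaps by auto
  qed
  then show ?thesis using P xs(2) by (auto simp: F_def)
qed


context ctx begin

definition Ft where "Ft D t = insert t {x\<in>set D. x \<le> t}"

lemma interp_mem:
  assumes "finite F" "t \<in> F"
  shows "chain (phi t) F = chain g {x\<in>F. x \<le> t}"
proof -
  have "chain (phi t) F = chain (phi t) {x\<in>F. x \<le> t} + chain (phi t) {x\<in>F. t \<le> x}"
    using assms by (rule chain_split)
  also have "\<dots> = chain g {x\<in>F. x \<le> t}" using chain_phi_low[OF assms(1), of t t] chain_phi_high[OF assms(1), of t t] by simp
  finally show ?thesis .
qed

lemma Ft_part: "partition01 D \<Longrightarrow> 0 \<le> t \<Longrightarrow> t \<le> 1 \<Longrightarrow> part 0 t (Ft D t)"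
  using partition_props[of D] by (auto simp: Ft_def part_def)

lemma Ft_gap:
  assumes D: "partition01 D" "mesh D < \<delta>" and t: "0 \<le> t" "t \<le> 1" and ab: "consec (Ft D t) a b"
  shows "b - a < \<delta>"
proof -
  note P = partition_props[OF D(1)]
  have a: "a \<in> set D" "a < t" "b \<le> t" using ab by (auto simp: consec_def Ft_def)
  have a1: "a \<noteq> 1" using a t by auto
  have aM: "a < Max (set D)" using a t P(7) by simp
  define n where "n = nxt (set D) a"
  have n: "n \<in> set D" "a < n" using nxt_props[OF P(1) a(1) aM] by (auto simp: n_def)
  have g: "n - a < \<delta>" using mesh_gap[OF D a(1) a1] by (simp add: n_def)
  show ?thesis
  proof (cases "n \<le> t")
    case True
    then have "n \<in> Ft D t" using n by (simp add: Ft_def)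
    then have "n \<le> a \<or> b \<le> n" using ab by (auto simp: consec_def)
    then show ?thesis using n g by auto
  next
    case False
    then show ?thesis using a g by auto
  qed
qed

lemma interp_close:
  assumes D: "partition01 D" "mesh D < \<delta>" and t: "0 \<le> t" "t \<le> 1"
    and dl: "\<forall>s\<in>{0..1}. \<forall>u\<in>{0..1}. \<bar>s - u\<bar> < \<delta> \<longrightarrow> tdist (\<gamma> s) (\<gamma> u) < e"
  shows "norm (interp_sum A \<gamma> D t - chain g (Ft D t)) \<le> 2 * (G * e powr \<eta>)"
proof -
  note P = partition_props[OF D(1)]
  have I: "interp_sum A \<gamma> D t = chain (phi t) (set D)" using interp_chain[OF P(5,6)] .
  consider "chain (phi t) (set D) = chain g (Ft D t)"
    | p q where "p \<in> set D" "q \<in> set D" "p < t" "t < q" "\<forall>y\<in>set D. y \<le> p \<or> q \<le> y"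
        "chain (phi t) (set D) - chain g (Ft D t) = phi t p q - g p t"
    using interp_decomp[OF P(1,2,3,4) t] unfolding Ft_def by blast
  then show ?thesis
  proof cases
    case 1 then show ?thesis using I G0 by simp
  next
    case 2
    have pq01: "0 \<le> p" "q \<le> 1" using 2 P(4) by auto
    have cons: "consec (set D) p q" using 2 by (auto simp: consec_def)
    have qn: "nxt (set D) p = q" using consec_nxt_eq[OF P(1) cons] .
    have "q - p < \<delta>" using mesh_gap[OF D 2(1)] qn 2 t by auto
    then have d1: "tdist (\<gamma> p) (\<gamma> q) < e" "tdist (\<gamma> p) (\<gamma> t) < e"
      using dl 2 pq01 t by auto
    have "norm (phi t p q) \<le> G * tdist (\<gamma> p) (\<gamma> q) powr \<eta>" using phi_bound 2 pq01 by auto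
    also have "\<dots> \<le> G * e powr \<eta>" using d1 G0 eta by (intro mult_left_mono powr_mono2) (auto simp: tdist_nonneg)
    finally have b1: "norm (phi t p q) \<le> G * e powr \<eta>" .
    have "norm (g p t) \<le> G * tdist (\<gamma> p) (\<gamma> t) powr \<eta>" using g_bound 2 pq01 t by auto
    also have "\<dots> \<le> G * e powr \<eta>" using d1 G0 eta by (intro mult_left_mono powr_mono2) (auto simp: tdist_nonneg)
    finally have b2: "norm (g p t) \<le> G * e powr \<eta>" .
    have "norm (interp_sum A \<gamma> D t - chain g (Ft D t)) = norm (phi t p q - g p t)" using I 2 by simp
    also have "\<dots> \<le> norm (phi t p q) + norm (g p t)" by (rule norm_triangle_ineq4)
    finally show ?thesis using b1 b2 by simp
  qed
qed

lemma W0: "0 \<le> W" using om_nonneg[of 0 0] om_le_W[of 0 0] by simp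

lemma interp_cauchy:
  assumes t: "0 \<le> t" "t \<le> 1" and eps: "0 < \<epsilon>"
  shows "\<exists>\<delta>>0. \<forall>D1 D2. partition01 D1 \<longrightarrow> partition01 D2 \<longrightarrow> mesh D1 < \<delta> \<longrightarrow> mesh D2 < \<delta> \<longrightarrow>
     norm (interp_sum A \<gamma> D1 t - interp_sum A \<gamma> D2 t) < \<epsilon>"
proof -
  have th: "0 < \<theta> - 1" using theta_gt1 by simp
  define e1 where "e1 = (\<epsilon> / (8 * (K * W + 1))) powr (1 / (\<theta> - 1))"
  have KW: "0 \<le> K * W" using K0 W0 by simp
  have e1p: "0 < e1" using eps KW by (simp add: e1_def)
  have e1a: "e1 powr (\<theta> - 1) = \<epsilon> / (8 * (K * W + 1))"
    using eps KW th by (simp add: e1_def powr_powr)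
  have c1: "K * e1 powr (\<theta> - 1) * W \<le> \<epsilon> / 8"
  proof -
    have "K * e1 powr (\<theta> - 1) * W = (K * W) * (\<epsilon> / (8 * (K * W + 1)))" using e1a by simp
    also have "\<dots> \<le> (K * W + 1) * (\<epsilon> / (8 * (K * W + 1)))" using KW eps by (intro mult_right_mono) auto
    also have "\<dots> = \<epsilon> / 8" using KW by (simp add: field_simps)
    finally show ?thesis .
  qed
  define e2 where "e2 = (\<epsilon> / (8 * (G + 1))) powr (1 / \<eta>)"
  have e2p: "0 < e2" using eps G0 by (simp add: e2_def)
  have e2a: "e2 powr \<eta> = \<epsilon> / (8 * (G + 1))" using eps G0 eta by (simp add: e2_def powr_powr)
  have c2: "G * e2 powr \<eta> \<le> \<epsilon> / 8"
  proof -
    have "G * e2 powr \<eta> = G * (\<epsilon> / (8 * (G + 1)))" using e2a by simp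
    also have "\<dots> \<le> (G + 1) * (\<epsilon> / (8 * (G + 1)))" using G0 eps by (intro mult_right_mono) auto
    also have "\<dots> = \<epsilon> / 8" using G0 by (simp add: field_simps)
    finally show ?thesis .
  qed
  obtain \<delta>1 where d1: "\<delta>1 > 0" "\<forall>a b. 0 \<le> a \<longrightarrow> a \<le> b \<longrightarrow> b \<le> 1 \<longrightarrow> b - a < \<delta>1 \<longrightarrow> om a b < e1"
    using om_small[OF e1p] by blast
  obtain \<delta>2 where d2: "\<delta>2 > 0" "\<forall>s\<in>{0..1}. \<forall>u\<in>{0..1}. \<bar>s - u\<bar> < \<delta>2 \<longrightarrow> tdist (\<gamma> s) (\<gamma> u) < e2"
    using gam_uc[OF e2p] by blast
  show ?thesis
  proof (intro exI[of _ "min \<delta>1 \<delta>2"] conjI allI impI)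
    show "0 < min \<delta>1 \<delta>2" using d1 d2 by simp
    fix D1 D2 assume D: "partition01 D1" "partition01 D2" "mesh D1 < min \<delta>1 \<delta>2" "mesh D2 < min \<delta>1 \<delta>2"
    have m1: "mesh D1 < \<delta>2" "mesh D2 < \<delta>2" "mesh D1 < \<delta>1" "mesh D2 < \<delta>1" using D by auto
    have n1: "norm (interp_sum A \<gamma> D1 t - chain g (Ft D1 t)) \<le> 2 * (G * e2 powr \<eta>)"
      using interp_close[OF D(1) m1(1) t d2(2)] .
    have n2: "norm (interp_sum A \<gamma> D2 t - chain g (Ft D2 t)) \<le> 2 * (G * e2 powr \<eta>)"
      using interp_close[OF D(2) m1(2) t d2(2)] .
    define R where "R = Ft D1 t \<union> Ft D2 t"
    have p1: "part 0 t (Ft D1 t)" "part 0 t (Ft D2 t)" using Ft_part D t by auto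
    have pR: "part 0 t R" using p1 by (auto simp: R_def part_def)
    have sm: "om a b \<le> e1" if "consec (Ft D t) a b" "D = D1 \<or> D = D2" for D a b
    proof -
      have "b - a < \<delta>1" using Ft_gap[of D \<delta>1 t a b] that D m1 t by auto
      moreover have "0 \<le> a" "a \<le> b" "b \<le> 1" using that p1 t by (auto simp: consec_def part_def)
      ultimately show ?thesis using d1(2) by fastforce
    qed
    have r1: "norm (chain g R - chain g (Ft D1 t)) \<le> K * e1 powr (\<theta> - 1) * W"
      using sm e1p by (intro refine_bound[OF p1(1) pR _ t(2)]) (auto simp: R_def)
    have r2: "norm (chain g R - chain g (Ft D2 t)) \<le> K * e1 powr (\<theta> - 1) * W"
      using sm e1p by (intro refine_bound[OF p1(2) pR _ t(2)]) (auto simp: R_def)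
    have "norm (interp_sum A \<gamma> D1 t - interp_sum A \<gamma> D2 t) \<le>
        norm (interp_sum A \<gamma> D1 t - chain g (Ft D1 t)) + norm (chain g R - chain g (Ft D1 t))
        + norm (chain g R - chain g (Ft D2 t)) + norm (interp_sum A \<gamma> D2 t - chain g (Ft D2 t))"
    proof -
      define a where "a = interp_sum A \<gamma> D1 t - chain g (Ft D1 t)"
      define y where "y = chain g R - chain g (Ft D2 t)"
      define z where "z = chain g R - chain g (Ft D1 t)"
      define w where "w = interp_sum A \<gamma> D2 t - chain g (Ft D2 t)"
      have eq: "interp_sum A \<gamma> D1 t - interp_sum A \<gamma> D2 t = (a + (y - z)) - w"
        by (simp add: a_def y_def z_def w_def algebra_simps)
      have "norm ((a + (y - z)) - w) \<le> norm (a + (y - z)) + norm w" by (rule norm_triangle_ineq4)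
      also have "norm (a + (y - z)) \<le> norm a + norm (y - z)" by (rule norm_triangle_ineq)
      also have "norm (y - z) \<le> norm y + norm z" by (rule norm_triangle_ineq4)
      finally show ?thesis unfolding eq by (simp add: a_def y_def z_def w_def)
    qed
    also have "\<dots> \<le> 2 * (\<epsilon>/8) + \<epsilon>/8 + \<epsilon>/8 + 2 * (\<epsilon>/8)" using n1 n2 r1 r2 c1 c2 by linarith
    also have "\<dots> < \<epsilon>" using eps by simp
    finally show "norm (interp_sum A \<gamma> D1 t - interp_sum A \<gamma> D2 t) < \<epsilon>" .
  qed
qed

end


context ctx begin

definition Plim where "Plim t L \<longleftrightarrow> (\<forall>\<epsilon>>0. \<exists>\<delta>>0. \<forall>D. partition01 D \<and> mesh D < \<delta> \<longrightarrow>
       norm (interp_sum A \<gamma> D t - L) < \<epsilon>)"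

lemma Plim_unique:
  assumes "Plim t L" "Plim t L'"
  shows "L' = L"
proof (rule ccontr)
  assume ne: "L' \<noteq> L"
  define e where "e = norm (L - L') / 2"
  have e: "0 < e" using ne by (simp add: e_def)
  obtain d1 where d1: "d1 > 0" "\<forall>D. partition01 D \<and> mesh D < d1 \<longrightarrow> norm (interp_sum A \<gamma> D t - L) < e"
    using assms(1) e unfolding Plim_def by blast
  obtain d2 where d2: "d2 > 0" "\<forall>D. partition01 D \<and> mesh D < d2 \<longrightarrow> norm (interp_sum A \<gamma> D t - L') < e"
    using assms(2) e unfolding Plim_def by blast
  obtain D where D: "partition01 D" "mesh D < min d1 d2"
    using partition_exists[of "min d1 d2" "{}"] d1 d2 by auto
  have a: "norm (interp_sum A \<gamma> D t - L) < e" "norm (interp_sum A \<gamma> D t - L') < e" using d1 d2 D by auto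
  have "norm (L - L') \<le> norm (interp_sum A \<gamma> D t - L) + norm (interp_sum A \<gamma> D t - L')"
    by (metis norm_minus_commute norm_triangle_ineq4 diff_diff_eq2 diff_add_cancel add_diff_cancel_left')
  then show False using a by (simp add: e_def)
qed

lemma gammaA_lim:
  assumes t: "0 \<le> t" "t \<le> 1"
  shows "Plim t (gammaA A \<gamma> t)"
proof -
  have "\<forall>n. \<exists>D. partition01 D \<and> mesh D < 1 / real (Suc n) \<and> {} \<subseteq> set D"
  proof
    fix n :: nat
    have "0 < 1 / real (Suc n)" by simp
    from partition_exists[OF this, of "{}"] show "\<exists>D. partition01 D \<and> mesh D < 1 / real (Suc n) \<and> {} \<subseteq> set D" by auto
  qed
  then obtain Ds where Ds: "\<And>n. partition01 (Ds n) \<and> mesh (Ds n) < 1 / real (Suc n)" by metis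
  define X where "X n = interp_sum A \<gamma> (Ds n) t" for n
  have mesh_small: "\<exists>M. \<forall>n\<ge>M. mesh (Ds n) < d" if d: "0 < d" for d
  proof -
    obtain M where M: "inverse (real (Suc M)) < d" using reals_Archimedean[OF d] by blast
    have "mesh (Ds n) < d" if "n \<ge> M" for n
    proof -
      have "1 / real (Suc n) \<le> 1 / real (Suc M)" using that by (simp add: frac_le)
      then show ?thesis using Ds[of n] M by (simp add: inverse_eq_divide)
    qed
    then show ?thesis by blast
  qed
  have C: "Cauchy X"
  proof (rule metric_CauchyI)
    fix e :: real assume e: "0 < e"
    obtain d where d: "d > 0" "\<forall>D1 D2. partition01 D1 \<longrightarrow> partition01 D2 \<longrightarrow> mesh D1 < d \<longrightarrow> mesh D2 < d \<longrightarrow>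
       norm (interp_sum A \<gamma> D1 t - interp_sum A \<gamma> D2 t) < e"
      using interp_cauchy[OF t e] by blast
    obtain M where M: "\<forall>n\<ge>M. mesh (Ds n) < d" using mesh_small[OF d(1)] by blast
    show "\<exists>M. \<forall>m\<ge>M. \<forall>n\<ge>M. dist (X m) (X n) < e"
      using M d Ds by (intro exI[of _ M]) (auto simp: X_def dist_norm)
  qed
  then obtain L where L: "X \<longlonglongrightarrow> L" using Cauchy_convergent convergent_def by blast
  have PL: "Plim t L" unfolding Plim_def
  proof (intro allI impI)
    fix e :: real assume e: "0 < e"
    obtain d where d: "d > 0" "\<forall>D1 D2. partition01 D1 \<longrightarrow> partition01 D2 \<longrightarrow> mesh D1 < d \<longrightarrow> mesh D2 < d \<longrightarrow>
       norm (interp_sum A \<gamma> D1 t - interp_sum A \<gamma> D2 t) < e/2"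
      using interp_cauchy[OF t, of "e/2"] e by auto
    obtain M where M: "\<forall>n\<ge>M. mesh (Ds n) < d" using mesh_small[OF d(1)] by blast
    obtain N where N: "\<forall>n\<ge>N. norm (X n - L) < e/2" using LIMSEQ_D[OF L, of "e/2"] e by auto
    define n where "n = max M N"
    have n1: "mesh (Ds n) < d" "norm (X n - L) < e/2" using M N by (auto simp: n_def)
    show "\<exists>\<delta>>0. \<forall>D. partition01 D \<and> mesh D < \<delta> \<longrightarrow> norm (interp_sum A \<gamma> D t - L) < e"
    proof (intro exI[of _ d] conjI allI impI d(1))
      fix D assume D: "partition01 D \<and> mesh D < d"
      have "norm (interp_sum A \<gamma> D t - X n) < e/2" using d(2) D n1 Ds[of n] by (auto simp: X_def)
      moreover have "norm (interp_sum A \<gamma> D t - L) \<le> norm (interp_sum A \<gamma> D t - X n) + norm (X n - L)"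
        by (metis norm_triangle_ineq diff_add_cancel add_diff_eq)
      ultimately show "norm (interp_sum A \<gamma> D t - L) < e" using n1 by simp
    qed
  qed
  have "gammaA A \<gamma> t = L"
    unfolding gammaA_def Plim_def[symmetric] using PL Plim_unique[OF PL] by (rule the_equality)
  then show ?thesis using PL by simp
qed

lemma incr:
  assumes st: "0 \<le> s" "s \<le> t" "t \<le> 1"
  shows "norm (gammaA A \<gamma> t - gammaA A \<gamma> s) \<le> G * tdist (\<gamma> s) (\<gamma> t) powr \<eta> + K * om s t powr \<theta>"
proof (rule field_le_epsilon)
  fix e :: real assume e: "0 < e"
  have t01: "0 \<le> t" "s \<le> 1" using st by auto
  obtain dt where dt: "dt > 0" "\<forall>D. partition01 D \<and> mesh D < dt \<longrightarrow> norm (interp_sum A \<gamma> D t - gammaA A \<gamma> t) < e/2"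
    using gammaA_lim[OF t01(1) st(3)] e unfolding Plim_def by (meson half_gt_zero)
  obtain ds where ds: "ds > 0" "\<forall>D. partition01 D \<and> mesh D < ds \<longrightarrow> norm (interp_sum A \<gamma> D s - gammaA A \<gamma> s) < e/2"
    using gammaA_lim[OF st(1) t01(2)] e unfolding Plim_def by (meson half_gt_zero)
  obtain D where D: "partition01 D" "mesh D < min dt ds" "{s, t} \<subseteq> set D"
    using partition_exists[of "min dt ds" "{s, t}"] dt ds st by auto
  note P = partition_props[OF D(1)]
  define F where "F = set D"
  have sF: "s \<in> F" "t \<in> F" using D by (auto simp: F_def)
  have It: "interp_sum A \<gamma> D t = chain g {x\<in>F. x \<le> t}"
    using interp_chain[OF P(5,6)] interp_mem[OF P(1) sF(2)[unfolded F_def]] by (simp add: F_def)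
  have Is: "interp_sum A \<gamma> D s = chain g {x\<in>F. x \<le> s}"
    using interp_chain[OF P(5,6)] interp_mem[OF P(1) sF(1)[unfolded F_def]] by (simp add: F_def)
  have finF: "finite F" using P by (simp add: F_def)
  have "chain g {x\<in>F. x \<le> t} = chain g {y\<in>{x\<in>F. x \<le> t}. y \<le> s} + chain g {y\<in>{x\<in>F. x \<le> t}. s \<le> y}"
    using finF sF st by (intro chain_split) auto
  also have "{y\<in>{x\<in>F. x \<le> t}. y \<le> s} = {x\<in>F. x \<le> s}" using st by auto
  also have "{y\<in>{x\<in>F. x \<le> t}. s \<le> y} = {x\<in>F. s \<le> x \<and> x \<le> t}" by auto
  finally have split: "interp_sum A \<gamma> D t - interp_sum A \<gamma> D s = chain g {x\<in>F. s \<le> x \<and> x \<le> t}"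
    using It Is by simp
  have pst: "part s t {x\<in>F. s \<le> x \<and> x \<le> t}" using finF sF st by (auto simp: part_def)
  have sew: "norm (chain g {x\<in>F. s \<le> x \<and> x \<le> t} - g s t) \<le> K * om s t powr \<theta>"
    using sew_chain[OF pst st(1,3)] .
  have gb: "norm (g s t) \<le> G * tdist (\<gamma> s) (\<gamma> t) powr \<eta>" using g_bound st by auto
  have a1: "norm (interp_sum A \<gamma> D t - gammaA A \<gamma> t) < e/2" using dt D by auto
  have a2: "norm (interp_sum A \<gamma> D s - gammaA A \<gamma> s) < e/2" using ds D by auto
  define It' where "It' = interp_sum A \<gamma> D t"
  define Is' where "Is' = interp_sum A \<gamma> D s"
  have eq: "gammaA A \<gamma> t - gammaA A \<gamma> s = (It' - Is' - g s t) + g s t - (It' - gammaA A \<gamma> t) + (Is' - gammaA A \<gamma> s)"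
    by (simp add: algebra_simps)
  have "norm (gammaA A \<gamma> t - gammaA A \<gamma> s) \<le> norm (It' - Is' - g s t) + norm (g s t) + norm (It' - gammaA A \<gamma> t) + norm (Is' - gammaA A \<gamma> s)"
    unfolding eq by (smt (verit) norm_triangle_ineq norm_triangle_ineq4)
  also have "\<dots> \<le> K * om s t powr \<theta> + G * tdist (\<gamma> s) (\<gamma> t) powr \<eta> + e/2 + e/2"
    using sew gb a1 a2 split unfolding It'_def Is'_def by simp
  finally show "norm (gammaA A \<gamma> t - gammaA A \<gamma> s) \<le> G * tdist (\<gamma> s) (\<gamma> t) powr \<eta> + K * om s t powr \<theta> + e"
    by simp
qed

end


lemma pow_split_le:
  fixes w e p :: real
  assumes "0 \<le> w" "w \<le> e" "1 \<le> p"
  shows "w powr p \<le> e powr (p - 1) * w"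
proof (cases "w = 0")
  case True then show ?thesis using assms by simp
next
  case False
  have "w powr p = w powr ((p - 1) + 1)" by simp
  also have "\<dots> = w powr (p - 1) * w powr 1" by (rule powr_add)
  finally have "w powr p = w powr (p - 1) * w" using assms by simp
  also have "\<dots> \<le> e powr (p - 1) * w"
    using assms False by (auto intro!: mult_right_mono powr_mono2)
  finally show ?thesis .
qed

lemma sum_powr_le:
  fixes b :: "'a \<Rightarrow> real"
  assumes "finite I" "\<And>i. i \<in> I \<Longrightarrow> 0 \<le> b i" "1 \<le> p"
  shows "(\<Sum>i\<in>I. b i powr p) \<le> (\<Sum>i\<in>I. b i) powr p"
proof -
  define B where "B = (\<Sum>i\<in>I. b i)"
  have B0: "0 \<le> B" using assms by (simp add: B_def sum_nonneg)
  have bi: "\<And>i. i \<in> I \<Longrightarrow> b i \<le> B" unfolding B_def using assms by (intro member_le_sum) auto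
  have "(\<Sum>i\<in>I. b i powr p) \<le> (\<Sum>i\<in>I. B powr (p - 1) * b i)"
    using assms bi by (intro sum_mono pow_split_le) auto
  also have "\<dots> = B powr (p - 1) * B" by (simp add: B_def sum_distrib_left)
  also have "\<dots> = B powr p"
  proof (cases "B = 0")
    case True then show ?thesis using assms by simp
  next
    case False
    have "B powr (p - 1) * B powr 1 = B powr (p - 1 + 1)" by (rule powr_add[symmetric])
    moreover have "B powr 1 = B" using B0 by simp
    ultimately show ?thesis by simp
  qed
  finally show ?thesis by (simp add: B_def)
qed

lemma conv2:
  fixes x y l p :: real
  assumes p: "1 \<le> p" and l: "0 < l" "l < 1" and xy: "0 \<le> x" "0 \<le> y"
  shows "(x + y) powr p \<le> l powr (1 - p) * x powr p + (1 - l) powr (1 - p) * y powr p"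
proof -
  have ge1: "1 \<le> c powr (1 - p)" if "0 < c" "c \<le> 1" for c :: real
  proof -
    have "c powr (p - 1) \<le> 1" using that p by (intro powr_le1) auto
    moreover have "c powr (1 - p) = 1 / c powr (p - 1)" using that by (simp add: powr_minus_divide[symmetric])
    moreover have "0 < c powr (p - 1)" using that by simp
    ultimately show ?thesis by simp
  qed
  have key: "l * (u powr p) = l powr (1 - p) * (l * u) powr p" if "0 \<le> u" "0 < l" for u l :: real
  proof -
    have "(l * u) powr p = l powr p * u powr p" using that by (simp add: powr_mult)
    then have "l powr (1 - p) * (l * u) powr p = (l powr (1 - p) * l powr p) * u powr p" by simp
    also have "l powr (1 - p) * l powr p = l" using that by (simp flip: powr_add)
    finally show ?thesis by simp
  qed
  consider "x = 0" | "y = 0" | "0 < x" "0 < y" using xy by linarith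
  then show ?thesis
  proof cases
    case 1
    then show ?thesis using ge1[of "1 - l"] l xy by (simp add: mult_le_cancel_right1)
  next
    case 2
    then show ?thesis using ge1[of l] l xy by (simp add: mult_le_cancel_right1)
  next
    case 3
    define u where "u = x / l"
    define v where "v = y / (1 - l)"
    have uv: "0 < u" "0 < v" using 3 l by (auto simp: u_def v_def)
    have xe: "x = l * u" "y = (1 - l) * v" using l by (auto simp: u_def v_def)
    have "(x + y) powr p = (\<lambda>z. z powr p) ((1 - (1 - l)) *\<^sub>R u + (1 - l) *\<^sub>R v)" using xe by simp
    also have "\<dots> \<le> (1 - (1 - l)) * u powr p + (1 - l) * v powr p"
      using convex_onD[OF powr_convex[OF p], of "1 - l" u v] l uv by simp
    also have "\<dots> = l * u powr p + (1 - l) * v powr p" by simp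
    also have "\<dots> = l powr (1 - p) * x powr p + (1 - l) powr (1 - p) * y powr p"
      using key[of u l] key[of v "1 - l"] uv l xe by simp
    finally show ?thesis .
  qed
qed

lemma minkowski_lite:
  fixes a b :: "'a \<Rightarrow> real"
  assumes "finite I" "\<And>i. i \<in> I \<Longrightarrow> 0 \<le> a i" "\<And>i. i \<in> I \<Longrightarrow> 0 \<le> b i" "1 \<le> p"
  shows "(\<Sum>i\<in>I. (a i + b i) powr p) \<le> ((\<Sum>i\<in>I. a i powr p) powr (1/p) + (\<Sum>i\<in>I. b i)) powr p"
proof -
  define A where "A = (\<Sum>i\<in>I. a i powr p) powr (1/p)"
  define B where "B = (\<Sum>i\<in>I. b i)"
  have Sa0: "0 \<le> (\<Sum>i\<in>I. a i powr p)" by (simp add: sum_nonneg)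
  have Ap: "A powr p = (\<Sum>i\<in>I. a i powr p)" using Sa0 assms(4) by (simp add: A_def powr_powr)
  have A0: "0 \<le> A" by (simp add: A_def)
  have B0: "0 \<le> B" using assms by (simp add: B_def sum_nonneg)
  have Bp: "(\<Sum>i\<in>I. b i powr p) \<le> B powr p" unfolding B_def using sum_powr_le assms by blast
  consider "A = 0" | "B = 0" | "0 < A" "0 < B" using A0 B0 by linarith
  then show ?thesis
  proof cases
    case 1
    then have "(\<Sum>i\<in>I. a i powr p) = 0" using Ap assms(4) by simp
    then have "\<And>i. i \<in> I \<Longrightarrow> a i powr p = 0" using assms(1,2) sum_nonneg_eq_0_iff[of I "\<lambda>i. a i powr p"] by auto
    then have "\<And>i. i \<in> I \<Longrightarrow> a i = 0" by simp
    then have "(\<Sum>i\<in>I. (a i + b i) powr p) = (\<Sum>i\<in>I. b i powr p)" by simp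
    then show ?thesis using Bp 1 unfolding A_def[symmetric] B_def[symmetric] by simp
  next
    case 2
    then have "\<And>i. i \<in> I \<Longrightarrow> b i = 0" using assms(1,3) sum_nonneg_eq_0_iff[of I b] by (auto simp: B_def)
    then have "(\<Sum>i\<in>I. (a i + b i) powr p) = A powr p" using Ap by simp
    then show ?thesis using 2 unfolding A_def[symmetric] B_def[symmetric] by simp
  next
    case 3
    define l where "l = A / (A + B)"
    have l: "0 < l" "l < 1" using 3 by (auto simp: l_def)
    have l1: "1 - l = B / (A + B)" using 3 by (simp add: l_def field_simps)
    have "(\<Sum>i\<in>I. (a i + b i) powr p) \<le> (\<Sum>i\<in>I. l powr (1 - p) * a i powr p + (1 - l) powr (1 - p) * b i powr p)"
      using assms l by (intro sum_mono conv2) auto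
    also have "\<dots> = l powr (1 - p) * A powr p + (1 - l) powr (1 - p) * (\<Sum>i\<in>I. b i powr p)"
      using Ap by (simp add: sum.distrib sum_distrib_left)
    also have "\<dots> \<le> l powr (1 - p) * A powr p + (1 - l) powr (1 - p) * B powr p"
      using Bp by (intro add_left_mono mult_left_mono) auto
    also have "l powr (1 - p) * A powr p = A * (A + B) powr (p - 1)"
    proof -
      have "l powr (1 - p) = A powr (1 - p) / (A + B) powr (1 - p)" by (simp add: l_def powr_divide)
      also have "\<dots> = A powr (1 - p) * (A + B) powr (p - 1)"
        using 3 by (simp add: powr_minus_divide[symmetric] divide_inverse powr_minus[symmetric])
      finally have "l powr (1 - p) * A powr p = (A powr (1 - p) * A powr p) * (A + B) powr (p - 1)" by simp
      also have "A powr (1 - p) * A powr p = A" using 3 by (simp flip: powr_add)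
      finally show ?thesis .
    qed
    also have "(1 - l) powr (1 - p) * B powr p = B * (A + B) powr (p - 1)"
    proof -
      have "(1 - l) powr (1 - p) = B powr (1 - p) / (A + B) powr (1 - p)" by (simp add: l1 powr_divide)
      also have "\<dots> = B powr (1 - p) * (A + B) powr (p - 1)"
        using 3 by (simp add: powr_minus_divide[symmetric] divide_inverse powr_minus[symmetric])
      finally have "(1 - l) powr (1 - p) * B powr p = (B powr (1 - p) * B powr p) * (A + B) powr (p - 1)" by simp
      also have "B powr (1 - p) * B powr p = B" using 3 by (simp flip: powr_add)
      finally show ?thesis .
    qed
    also have "A * (A + B) powr (p - 1) + B * (A + B) powr (p - 1) = (A + B) powr (p - 1) * (A + B) powr 1"
    proof -
      have "(A + B) powr 1 = A + B" using 3 by simp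
      then show ?thesis by (simp add: algebra_simps)
    qed
    also have "\<dots> = (A + B) powr (p - 1 + 1)" by (rule powr_add[symmetric])
    also have "\<dots> = (A + B) powr p" by simp
    finally show ?thesis by (simp add: A_def B_def)
  qed
qed


context ctx begin

lemma final_sum:
  assumes p: "1 \<le> p" "1 \<le> p * \<eta>" and D: "partition01 D"
  shows "sum_list (map (\<lambda>(s,t). dist (gammaA A \<gamma> s) (gammaA A \<gamma> t) powr p) (intervals D))
    \<le> (G * (sum_list (map (\<lambda>(s,t). tdist (\<gamma> s) (\<gamma> t) powr (p * \<eta>)) (intervals D))) powr (1/p)
        + K * W powr \<theta>) powr p"
proof -
  note P = partition_props[OF D]
  define F where "F = set D"
  define I where "I = F - {Max F}"
  define nx where "nx = nxt F"
  have finI: "finite I" using P by (simp add: I_def F_def)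
  have rng: "0 \<le> x \<and> x < nx x \<and> nx x \<le> 1" if "x \<in> I" for x
  proof -
    have x: "x \<in> F" "x \<noteq> Max F" using that by (auto simp: I_def)
    show ?thesis using nxt_le_max[OF P(1) x[unfolded F_def]] P x by (auto simp: nx_def F_def)
  qed
  have L: "sum_list (map (\<lambda>(s,t). dist (gammaA A \<gamma> s) (gammaA A \<gamma> t) powr p) (intervals D))
      = (\<Sum>x\<in>I. dist (gammaA A \<gamma> x) (gammaA A \<gamma> (nx x)) powr p)"
    using list_chain[OF P(5,6), of "\<lambda>s t. dist (gammaA A \<gamma> s) (gammaA A \<gamma> t) powr p"]
    by (simp add: chain_def I_def F_def nx_def)
  define T where "T = (\<Sum>x\<in>I. tdist (\<gamma> x) (\<gamma> (nx x)) powr (p * \<eta>))"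
  have R: "sum_list (map (\<lambda>(s,t). tdist (\<gamma> s) (\<gamma> t) powr (p * \<eta>)) (intervals D)) = T"
    using list_chain[OF P(5,6), of "\<lambda>s t. tdist (\<gamma> s) (\<gamma> t) powr (p * \<eta>)"]
    by (simp add: chain_def I_def F_def nx_def T_def)
  define a where "a x = G * tdist (\<gamma> x) (\<gamma> (nx x)) powr \<eta>" for x
  define b where "b x = K * om x (nx x) powr \<theta>" for x
  have a0: "\<And>x. 0 \<le> a x" using G0 by (simp add: a_def)
  have b0: "\<And>x. 0 \<le> b x" using K0 by (simp add: b_def)
  have p0: "0 < p" using p by simp
  have "(\<Sum>x\<in>I. dist (gammaA A \<gamma> x) (gammaA A \<gamma> (nx x)) powr p) \<le> (\<Sum>x\<in>I. (a x + b x) powr p)"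
  proof (rule sum_mono)
    fix x assume x: "x \<in> I"
    have "dist (gammaA A \<gamma> x) (gammaA A \<gamma> (nx x)) = norm (gammaA A \<gamma> (nx x) - gammaA A \<gamma> x)"
      by (simp add: dist_norm norm_minus_commute)
    also have "\<dots> \<le> a x + b x" unfolding a_def b_def using rng[OF x] by (intro incr) auto
    finally show "dist (gammaA A \<gamma> x) (gammaA A \<gamma> (nx x)) powr p \<le> (a x + b x) powr p"
      using p0 by (intro powr_mono2) auto
  qed
  also have "\<dots> \<le> ((\<Sum>x\<in>I. a x powr p) powr (1/p) + (\<Sum>x\<in>I. b x)) powr p"
    using minkowski_lite[OF finI _ _ p(1), of a b] a0 b0 by simp
  also have "(\<Sum>x\<in>I. a x powr p) = G powr p * T"
  proof -
    have "a x powr p = G powr p * tdist (\<gamma> x) (\<gamma> (nx x)) powr (p * \<eta>)" for x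
      using G0 by (simp add: a_def powr_mult powr_powr tdist_nonneg mult.commute)
    then show ?thesis by (simp add: T_def sum_distrib_left)
  qed
  also have "(G powr p * T) powr (1/p) = G * T powr (1/p)"
  proof -
    have T0: "0 \<le> T" by (simp add: T_def sum_nonneg)
    have "(G powr p * T) powr (1/p) = (G powr p) powr (1/p) * T powr (1/p)" using G0 T0 by (simp add: powr_mult)
    also have "(G powr p) powr (1/p) = G" using G0 p0 by (simp add: powr_powr)
    finally show ?thesis .
  qed
  also have "(\<Sum>x\<in>I. b x) \<le> K * W powr \<theta>"
  proof -
    have bsum: "(\<Sum>x\<in>I. b x) = K * (\<Sum>x\<in>I. om x (nx x) powr \<theta>)" by (simp add: b_def sum_distrib_left)
    have s1: "(\<Sum>x\<in>I. om x (nx x) powr \<theta>) \<le> (\<Sum>x\<in>I. om x (nx x)) powr \<theta>"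
      using theta_gt1 by (intro sum_powr_le finI om_nonneg) (auto dest: rng)
    have "(\<Sum>x\<in>I. om x (nx x)) = chain om F" by (simp add: chain_def I_def nx_def)
    also have "chain om F \<le> om 0 1" using P by (intro chain_om_le) (auto simp: part_def F_def)
    also have "om 0 1 \<le> W" by (rule om_le_W) auto
    finally have s2: "(\<Sum>x\<in>I. om x (nx x)) \<le> W" .
    have s0: "0 \<le> (\<Sum>x\<in>I. om x (nx x))" by (intro sum_nonneg om_nonneg) (auto dest: rng)
    have s3: "(\<Sum>x\<in>I. om x (nx x)) powr \<theta> \<le> W powr \<theta>" using s0 s2 theta_gt1 by (intro powr_mono2) auto
    have "(\<Sum>x\<in>I. om x (nx x) powr \<theta>) \<le> W powr \<theta>" using s1 s3 by linarith
    then have "K * (\<Sum>x\<in>I. om x (nx x) powr \<theta>) \<le> K * W powr \<theta>" using K0 by (rule mult_left_mono)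
    then show ?thesis using \<open>(\<Sum>x\<in>I. b x) = K * (\<Sum>x\<in>I. om x (nx x) powr \<theta>)\<close> by simp
  qed
  then have "((G * T powr (1/p)) + (\<Sum>x\<in>I. b x)) powr p \<le> (G * T powr (1/p) + K * W powr \<theta>) powr p"
  proof -
    have "0 \<le> (\<Sum>x\<in>I. b x)" using b0 by (simp add: sum_nonneg)
    moreover have "0 \<le> G * T powr (1/p)" using G0 by simp
    ultimately show ?thesis using p0 \<open>(\<Sum>x\<in>I. b x) \<le> K * W powr \<theta>\<close> by (intro powr_mono2) auto
  qed
  finally show ?thesis unfolding L R .
qed

end


lemma sum_list_const_one: "sum_list (map (\<lambda>x. (1::real)) xs) = real (length xs)"
  by (induction xs) auto

lemma alpha0_inf: "alpha_var 0 \<gamma> = \<infinity>"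
proof -
  have low: "ereal (real (Suc n)) \<le> alpha_var 0 \<gamma>" for n
  proof -
    define D where "D = map (\<lambda>k. real k / real (Suc n)) [0..<Suc (Suc n)]"
    have len: "length D = Suc (Suc n)" by (simp add: D_def)
    have sw: "sorted_wrt (<) D"
      unfolding D_def sorted_wrt_map
      by (rule sorted_wrt_mono_rel[OF _ sorted_wrt_upt]) (simp add: divide_strict_right_mono)
    have hd: "hd D = 0" by (simp add: D_def upt_rec)
    have lst: "last D = 1" by (simp add: D_def)
    have P: "partition01 D" using len sw hd lst by (simp add: partition01_def)
    have li: "length (intervals D) = Suc n" using len by (simp add: intervals_def)
    have "sum_list (map (\<lambda>(a,b). rpow (tri_size \<gamma> a b) 0) (intervals D)) = real (Suc n)"
    proof -
      have cp: "(\<lambda>(a::real, b::real). rpow (tri_size \<gamma> a b) 0) = (\<lambda>x. 1)" by (auto simp: rpow_def)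
      show ?thesis unfolding cp using sum_list_const_one[of "intervals D"] li by simp
    qed
    moreover have "ereal (sum_list (map (\<lambda>(a,b). rpow (tri_size \<gamma> a b) 0) (intervals D))) \<le> alpha_var 0 \<gamma>"
      unfolding alpha_var_def using P by (intro SUP_upper) simp
    ultimately show ?thesis by simp
  qed
  show ?thesis
  proof (cases "alpha_var 0 \<gamma>")
    case (real r)
    obtain n :: nat where "r < real n" using reals_Archimedean2 by blast
    then have "ereal r < ereal (real (Suc n))" by simp
    then show ?thesis using low[of n] real by simp
  next
    case MInf then show ?thesis using low[of 0] by simp
  qed simp
qed

lemma ereal_fin_parts:
  assumes "a + b < (\<infinity>::ereal)" "0 \<le> a" "0 \<le> b"
  obtains x y where "a = ereal x" "b = ereal y" "0 \<le> x" "0 \<le> y"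
  using assms by (cases a; cases b) auto

theorem corollary3p19:
  fixes \<alpha> \<alpha>' \<eta> p :: real
    and \<gamma> :: "real \<Rightarrow> real^2"
    and A :: "(real^2) \<times> (real^2) \<Rightarrow> 'e::banach"
  assumes "0 \<le> \<alpha>" "\<alpha> < \<alpha>'" "\<alpha>' \<le> 1"
    and "0 < \<eta>" "\<eta> \<le> 1" "p \<ge> 1 / \<eta>"
    and "torus_path \<gamma>" "alpha_var \<alpha> \<gamma> < \<infinity>"
    and "A \<in> Omega" "symm_norm \<alpha>' A + gr_norm \<eta> A < \<infinity>"
  shows "pvar dist (gammaA A \<gamma>) p
     \<le> gr_norm \<eta> A * epowr (pvar tdist \<gamma> (p * \<eta>)) \<eta>
       + ereal (2 powr (\<alpha>' / \<alpha>) * zeta_real (\<alpha>' / \<alpha>)) * symm_norm \<alpha>' A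
         * epowr (alpha_var \<alpha> \<gamma>) (\<alpha>' / \<alpha>)"
proof -
  have al: "0 < \<alpha>"
  proof (rule ccontr)
    assume "\<not> 0 < \<alpha>"
    then have "\<alpha> = 0" using assms(1) by simp
    then show False using assms(8) alpha0_inf[of \<gamma>] by simp
  qed
  have g0: "\<gamma> 0 \<in> torus" using assms(7) by (auto simp: torus_path_def)
  have gr0: "0 \<le> gr_norm \<eta> A"
  proof -
    define e :: "real^2" where "e = (\<chi> i. if i = 1 then 1/4 else 0)"
    have ne: "norm e = 1/4" unfolding e_def norm_vec_def L2_set_def sum_2 by simp
    have up: "ereal (norm (A (\<gamma> 0, e)) / norm (snd (\<gamma> 0, e)) powr \<eta>) \<le> gr_norm \<eta> A"
      by (rule gr_upper) (use ne g0 in \<open>auto simp: segs_def\<close>)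
    have nn: "0 \<le> norm (A (\<gamma> 0, e)) / norm (snd (\<gamma> 0, e)) powr \<eta>" by simp
    show ?thesis by (rule order_trans[OF _ up]) (use nn in simp)
  qed
  have sy0: "0 \<le> symm_norm \<alpha>' A"
  proof -
    have T: "(\<gamma> 0, \<gamma> 0, \<gamma> 0) \<in> triangles" using g0 by (simp add: triangles_def)
    have "eratio (norm (bdry A (\<gamma> 0, \<gamma> 0, \<gamma> 0) - bdry A (\<gamma> 0, \<gamma> 0, \<gamma> 0))) (tri_dist (\<gamma> 0, \<gamma> 0, \<gamma> 0) (\<gamma> 0, \<gamma> 0, \<gamma> 0) powr (\<alpha>'/2)) \<le> symm_norm \<alpha>' A"
      by (rule symm_upper[OF T T])
    moreover have "eratio (norm (bdry A (\<gamma> 0, \<gamma> 0, \<gamma> 0) - bdry A (\<gamma> 0, \<gamma> 0, \<gamma> 0))) (tri_dist (\<gamma> 0, \<gamma> 0, \<gamma> 0) (\<gamma> 0, \<gamma> 0, \<gamma> 0) powr (\<alpha>'/2)) = 0"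
      by (simp add: eratio_def)
    ultimately show ?thesis by simp
  qed
  obtain S G where SG: "symm_norm \<alpha>' A = ereal S" "gr_norm \<eta> A = ereal G" "0 \<le> S" "0 \<le> G"
    using ereal_fin_parts[OF assms(10) sy0 gr0] by blast
  have av0: "0 \<le> alpha_var \<alpha> \<gamma>"
  proof -
    have P: "partition01 [0, 1]" by (simp add: partition01_def)
    have up: "ereal (sum_list (map (\<lambda>(a,b). rpow (tri_size \<gamma> a b) \<alpha>) (intervals [0,1]))) \<le> alpha_var \<alpha> \<gamma>"
      unfolding alpha_var_def using P by (intro SUP_upper) simp
    have nn: "0 \<le> sum_list (map (\<lambda>(a,b). rpow (tri_size \<gamma> a b) \<alpha>) (intervals [0,1]))"
      using al by (simp add: intervals_def rpow_def)
    show ?thesis by (rule order_trans[OF _ up]) (use nn in simp)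
  qed
  obtain W where W: "alpha_var \<alpha> \<gamma> = ereal W" "0 \<le> W"
    using assms(8) av0 by (cases "alpha_var \<alpha> \<gamma>") auto
  interpret C: ctx \<alpha> \<alpha>' \<eta> \<gamma> A G S W
    using al assms SG W by unfold_locales auto
  have p1: "1 \<le> p * \<eta>" using assms(4,6) by (simp add: field_simps)
  have "1 \<le> 1 / \<eta>" using assms(4,5) by simp
  then have p1': "1 \<le> p" using assms(6) by linarith
  have pp: "0 < p" using p1' by simp
  define Vs where "Vs = (SUP D \<in> {D. partition01 D}. ereal (sum_list (map (\<lambda>(s,t). tdist (\<gamma> s) (\<gamma> t) powr (p * \<eta>)) (intervals D))))"
  define Xs where "Xs = (SUP D \<in> {D. partition01 D}. ereal (sum_list (map (\<lambda>(s,t). dist (gammaA A \<gamma> s) (gammaA A \<gamma> t) powr p) (intervals D))))"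
  have P01: "partition01 [0, 1]" by (simp add: partition01_def)
  have Vs0: "0 \<le> Vs"
  proof -
    have up: "ereal (sum_list (map (\<lambda>(s,t). tdist (\<gamma> s) (\<gamma> t) powr (p * \<eta>)) (intervals [0,1]))) \<le> Vs"
      unfolding Vs_def using P01 by (intro SUP_upper) simp
    have nn: "0 \<le> sum_list (map (\<lambda>(s,t). tdist (\<gamma> s) (\<gamma> t) powr (p * \<eta>)) (intervals [0,1]))"
      by (simp add: intervals_def)
    show ?thesis by (rule order_trans[OF _ up]) (use nn in simp)
  qed
  have Xs0: "0 \<le> Xs"
  proof -
    have up: "ereal (sum_list (map (\<lambda>(s,t). dist (gammaA A \<gamma> s) (gammaA A \<gamma> t) powr p) (intervals [0,1]))) \<le> Xs"
      unfolding Xs_def using P01 by (intro SUP_upper) simp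
    have nn: "0 \<le> sum_list (map (\<lambda>(s,t). dist (gammaA A \<gamma> s) (gammaA A \<gamma> t) powr p) (intervals [0,1]))"
      by (simp add: intervals_def)
    show ?thesis by (rule order_trans[OF _ up]) (use nn in simp)
  qed
  have lhs: "pvar dist (gammaA A \<gamma>) p = epowr Xs (1/p)" by (simp add: pvar_def Xs_def)
  have pv: "pvar tdist \<gamma> (p * \<eta>) = epowr Vs (1 / (p * \<eta>))" by (simp add: pvar_def Vs_def)
  have t2: "ereal (2 powr (\<alpha>' / \<alpha>) * zeta_real (\<alpha>' / \<alpha>)) * symm_norm \<alpha>' A * epowr (alpha_var \<alpha> \<gamma>) (\<alpha>' / \<alpha>)
      = ereal (C.K * W powr C.\<theta>)"
    using SG W by (simp add: epowr_def C.K_def C.\<theta>_def algebra_simps)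
  show ?thesis
  proof (cases "Vs = \<infinity> \<and> 0 < G")
    case True
    have "epowr (pvar tdist \<gamma> (p * \<eta>)) \<eta> = \<infinity>"
      using True pv pp assms(4) by (simp add: epowr_def)
    then have prod: "gr_norm \<eta> A * epowr (pvar tdist \<gamma> (p * \<eta>)) \<eta> = \<infinity>" using True SG by simp
    show ?thesis unfolding t2 prod by simp
  next
    case False
    obtain V0 where V0: "0 \<le> V0" "G = 0 \<or> Vs = ereal V0"
    proof (cases "Vs = \<infinity>")
      case True then show ?thesis using False that[of 0] SG by auto
    next
      case False then show ?thesis using Vs0 that by (cases Vs) auto
    qed
    define Cc where "Cc = G * V0 powr (1/p) + C.K * W powr C.\<theta>"
    have Cc0: "0 \<le> Cc" using SG V0 C.K0 by (simp add: Cc_def)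
    have t1: "gr_norm \<eta> A * epowr (pvar tdist \<gamma> (p * \<eta>)) \<eta> = ereal (G * V0 powr (1/p))"
    proof (cases "G = 0")
      case True then show ?thesis using SG by (simp add: zero_ereal_def[symmetric])
    next
      case False
      then have "Vs = ereal V0" using V0 by simp
      then have "epowr (pvar tdist \<gamma> (p * \<eta>)) \<eta> = ereal ((V0 powr (1 / (p * \<eta>))) powr \<eta>)"
        using pv by (simp add: epowr_def)
      also have "(V0 powr (1 / (p * \<eta>))) powr \<eta> = V0 powr (1/p)"
        using assms(4) by (simp add: powr_powr)
      finally show ?thesis using SG by simp
    qed
    have bound: "sum_list (map (\<lambda>(s,t). dist (gammaA A \<gamma> s) (gammaA A \<gamma> t) powr p) (intervals D)) \<le> Cc powr p"
      if D: "partition01 D" for D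
    proof -
      define T where "T = sum_list (map (\<lambda>(s,t). tdist (\<gamma> s) (\<gamma> t) powr (p * \<eta>)) (intervals D))"
      have T0: "0 \<le> T" unfolding T_def by (intro sum_list_nonneg) auto
      have "sum_list (map (\<lambda>(s,t). dist (gammaA A \<gamma> s) (gammaA A \<gamma> t) powr p) (intervals D))
          \<le> (G * T powr (1/p) + C.K * W powr C.\<theta>) powr p"
        using C.final_sum[OF p1' p1 D] by (simp add: T_def)
      also have "G * T powr (1/p) \<le> G * V0 powr (1/p)"
      proof (cases "G = 0")
        case True then show ?thesis by simp
      next
        case False
        then have "Vs = ereal V0" using V0 by simp
        moreover have "ereal T \<le> Vs" unfolding Vs_def T_def using D by (intro SUP_upper) simp
        ultimately have "T \<le> V0" by simp
        then show ?thesis using SG T0 pp by (intro mult_left_mono powr_mono2) auto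
      qed
      then have "(G * T powr (1/p) + C.K * W powr C.\<theta>) powr p \<le> Cc powr p"
        unfolding Cc_def using SG C.K0 pp by (intro powr_mono2) auto
      finally show ?thesis .
    qed
    have "Xs \<le> ereal (Cc powr p)" unfolding Xs_def using bound by (intro SUP_least) simp
    then obtain x where x: "Xs = ereal x" "0 \<le> x" "x \<le> Cc powr p" using Xs0 by (cases Xs) auto
    have "pvar dist (gammaA A \<gamma>) p = ereal (x powr (1/p))" using lhs x by (simp add: epowr_def)
    also have "x powr (1/p) \<le> (Cc powr p) powr (1/p)" using x pp by (intro powr_mono2) auto
    also have "(Cc powr p) powr (1/p) = Cc" using Cc0 pp by (simp add: powr_powr)
    finally have "pvar dist (gammaA A \<gamma>) p \<le> ereal Cc" by simp
    also have "ereal Cc = gr_norm \<eta> A * epowr (pvar tdist \<gamma> (p * \<eta>)) \<eta>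
       + ereal (2 powr (\<alpha>' / \<alpha>) * zeta_real (\<alpha>' / \<alpha>)) * symm_norm \<alpha>' A * epowr (alpha_var \<alpha> \<gamma>) (\<alpha>' / \<alpha>)"
      unfolding t1 t2 Cc_def by simp
    finally show ?thesis .
  qed
qed


end
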